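(* Let $\mathcal L_0,\mathcal L_1$ be as described in the context and $\mathcal L_N=\mathcal L_0+\mathcal P_N\mathcal L_1\mathcal P_N$. For any $c>0$, for all sufficiently large $N$, $$\sigma(\mathcal L_0+\mathcal P_N\mathcal L_1;\operatorname{ran}\mathcal P_N)\cap\{z\in\mathbb C:|z|\le cN^{k-1}\}=\sigma(\mathcal L_N;L^2(\mathbb T))\cap\{z\in\mathbb C:|z|\le cN^{k-1}\}.$$
   Context: $\mathbb T=[0,2\pi)$ with endpoints identified; $e_j(\theta)=e^{ij\theta}$, $u_j=\frac1{2\pi}\int_0^{2\pi}u\bar e_j\,d\theta$; $H^s(\mathbb T)$ the Sobolev space with norm $\|u\|_s^2=c_{|s|}\sum_j|u_j|^2\max\{1,|j|\}^{2s}$. For $N\ge1$, $N_-=\lfloor N/2\rfloor$, $N_+=\lfloor(N-1)/2\rfloor$, $\mathcal P_Nu=\sum_{j=-N_-}^{N_+}u_je_j$. Fix integers $k\ge1$, $0\le p<k$, $0\le q\le k$, $\ell\ge1$, constants $c_q,\dots,c_k\in\mathbb C$ with $c_k\ne0$, and $a_0,\dots,a_p\in H^\ell(\mathbb T)$; $\mathcal L_0u=\sum_{j=q}^kc_j\frac{d^ju}{d\theta^j}$, $\mathcal L_1u=\sum_{j=0}^pa_j\frac{d^ju}{d\theta^j}$. $\sigma(\mathcal L_0+\mathcal P_N\mathcal L_1;\operatorname{ran}\mathcal P_N)$ is the spectrum (set of eigenvalues) of the restriction of $\mathcal L_0+\mathcal P_N\mathcal L_1$ to the finite-dimensional invariant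 space $\operatorname{ran}\mathcal P_N$; $\sigma(\mathcal L_N;L^2(\mathbb T))$ is the spectrum of $\mathcal L_N$ acting on $L^2(\mathbb T)$ (with domain $H^k(\mathbb T)$). *)

theory Defs
  imports "HOL-Analysis.Analysis"
begin

text \<open>Functions on the torus T = [0,2pi) are represented by functions real => complex,
  of which only the values on [0,2pi] matter (everything is up to a.e. equality on [0,2pi]).\<close>

type_synonym cfun = "real \<Rightarrow> complex"

definition ebasis :: "int \<Rightarrow> cfun" where
  "ebasis j = (\<lambda>\<theta>. exp (\<i> * of_int j * of_real \<theta>))"

definition L2T :: "cfun set" where
  "L2T = {u. set_borel_measurable lebesgue {0..2*pi} u \<and>
             set_integrable lebesgue {0..2*pi} (\<lambda>\<theta>. (cmod (u \<theta>))\<^sup>2)}"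

definition l2normT :: "cfun \<Rightarrow> real" where
  "l2normT u = sqrt (LINT \<theta>:{0..2*pi}|lebesgue. (cmod (u \<theta>))\<^sup>2)"

definition fcoeff :: "cfun \<Rightarrow> int \<Rightarrow> complex" where
  "fcoeff u j = complex_of_real (1 / (2*pi)) *
      (LINT \<theta>:{0..2*pi}|lebesgue. u \<theta> * cnj (ebasis j \<theta>))"

definition HsT :: "nat \<Rightarrow> cfun set" where
  "HsT s = {u \<in> L2T. ((\<lambda>j. (cmod (fcoeff u j))\<^sup>2 * (max 1 (abs (real_of_int j))) ^ (2 * s)) summable_on (UNIV :: int set))}"

definition aeqT :: "cfun \<Rightarrow> cfun \<Rightarrow> bool" where
  "aeqT u v \<longleftrightarrow> (AE \<theta> in lebesgue. \<theta> \<in> {0..2*pi} \<longrightarrow> u \<theta> = v \<theta>)"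

text \<open>(Weak) j-th derivative on T, characterised in Fourier variables: the L^2 function
  whose coefficients are (i m)^j u_m (exists for u in H^j).\<close>
definition derivT :: "nat \<Rightarrow> cfun \<Rightarrow> cfun" where
  "derivT j u = (SOME v. v \<in> L2T \<and> (\<forall>m. fcoeff v m = (\<i> * of_int m) ^ j * fcoeff u m))"

definition Nminus :: "nat \<Rightarrow> int" where "Nminus N = int (N div 2)"
definition Nplus :: "nat \<Rightarrow> int" where "Nplus N = (int N - 1) div 2"

definition projN :: "nat \<Rightarrow> cfun \<Rightarrow> cfun" where
  "projN N u = (\<lambda>\<theta>. \<Sum>j\<in>{- Nminus N .. Nplus N}. fcoeff u j * ebasis j \<theta>)"

definition ranP :: "nat \<Rightarrow> cfun set" where
  "ranP N = {u. \<exists>b. u = (\<lambda>\<theta>. \<Sum>j\<in>{- Nminus N .. Nplus N}. b j * ebasis j \<theta>)}"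

definition L0op :: "nat \<Rightarrow> nat \<Rightarrow> (nat \<Rightarrow> complex) \<Rightarrow> cfun \<Rightarrow> cfun" where
  "L0op q k c u = (\<lambda>\<theta>. \<Sum>j\<in>{q..k}. c j * derivT j u \<theta>)"

definition L1op :: "nat \<Rightarrow> (nat \<Rightarrow> cfun) \<Rightarrow> cfun \<Rightarrow> cfun" where
  "L1op p a u = (\<lambda>\<theta>. \<Sum>j\<in>{0..p}. a j \<theta> * derivT j u \<theta>)"

text \<open>Spectrum of an operator L acting in L^2(T) with domain D: complement of the
  resolvent set (L - z : D -> L^2 bijective, modulo a.e. equality, with bounded inverse).\<close>
definition spectrumL2 :: "(cfun \<Rightarrow> cfun) \<Rightarrow> cfun set \<Rightarrow> complex set" where
  "spectrumL2 L D = {z. \<not> (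
      (\<forall>f\<in>L2T. \<exists>u\<in>D. aeqT (\<lambda>\<theta>. L u \<theta> - z * u \<theta>) f) \<and>
      (\<forall>u\<in>D. aeqT (\<lambda>\<theta>. L u \<theta> - z * u \<theta>) (\<lambda>_. 0) \<longrightarrow> aeqT u (\<lambda>_. 0)) \<and>
      (\<exists>C. \<forall>u\<in>D. l2normT u \<le> C * l2normT (\<lambda>\<theta>. L u \<theta> - z * u \<theta>)))}"

definition eigs_on :: "(cfun \<Rightarrow> cfun) \<Rightarrow> cfun set \<Rightarrow> complex set" where
  "eigs_on M V = {z. \<exists>u\<in>V. \<not> aeqT u (\<lambda>_. 0) \<and> aeqT (M u) (\<lambda>\<theta>. z * u \<theta>)}"

end

theory Submission
  imports Defs "Jordan_Normal_Form.Determinant"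
begin

abbreviation TT :: "real set" where "TT \<equiv> {0..2*pi}"
abbreviation mu :: "real measure" where "mu \<equiv> lebesgue_on TT"

lemma TT_sets[simp]: "TT \<in> sets lebesgue" by simp

lemma space_mu[simp]: "space mu = TT"
  by (simp add: space_restrict_space)

lemma fin_mu: "finite_measure mu"
  by (rule finite_measure_lebesgue_on) simp

lemma L2T_iff: "u \<in> L2T \<longleftrightarrow> u \<in> borel_measurable mu \<and> integrable mu (\<lambda>\<theta>. (cmod (u \<theta>))\<^sup>2)"
  unfolding L2T_def set_borel_measurable_def set_integrable_def
  by (simp add: borel_measurable_restrict_space_iff integrable_restrict_space)

lemma fcoeff_mu: "fcoeff u j = complex_of_real (1/(2*pi)) * integral\<^sup>L mu (\<lambda>\<theta>. u \<theta> * cnj (ebasis j \<theta>))"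
  unfolding fcoeff_def set_lebesgue_integral_def by (simp add: integral_restrict_space)

lemma aeqT_mu: "aeqT u v \<longleftrightarrow> (AE \<theta> in mu. u \<theta> = v \<theta>)"
  unfolding aeqT_def by (simp add: AE_restrict_space_iff)

lemma l2normT_mu: "l2normT u = sqrt (integral\<^sup>L mu (\<lambda>\<theta>. (cmod (u \<theta>))\<^sup>2))"
  unfolding l2normT_def set_lebesgue_integral_def by (simp add: integral_restrict_space)

lemma ebasis_cnj: "cnj (ebasis j \<theta>) = ebasis (-j) \<theta>"
  unfolding ebasis_def by (simp add: exp_cnj)

lemma ebasis_mult: "ebasis j \<theta> * ebasis m \<theta> = ebasis (j+m) \<theta>"
  unfolding ebasis_def by (simp add: exp_add[symmetric] algebra_simps)

lemma norm_ebasis[simp]: "cmod (ebasis j \<theta>) = 1"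
  unfolding ebasis_def by (simp add: norm_exp_eq_Re)

lemma ebasis_cont[continuous_intros]: "continuous_on A (ebasis j)"
  unfolding ebasis_def by (intro continuous_intros)

lemma ebasis_meas[measurable]: "ebasis j \<in> borel_measurable mu"
  by (rule continuous_imp_measurable_on_sets_lebesgue) (auto intro: continuous_intros)

lemma cont_meas_mu: "continuous_on TT f \<Longrightarrow> f \<in> borel_measurable mu"
  by (rule continuous_imp_measurable_on_sets_lebesgue) auto

lemma cont_integral_mu:
  fixes f :: "real \<Rightarrow> 'a::euclidean_space"
  assumes "continuous_on TT f"
  shows "integrable mu f" "integral\<^sup>L mu f = integral TT f"
  using continuous_imp_integrable_real[OF assms] apply simp
  using continuous_imp_integrable_real[OF assms] by (rule lebesgue_integral_eq_integral) simp

lemma int_ebasis: "integral\<^sup>L mu (ebasis j) = (if j = 0 then 2*pi else 0)"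
proof -
  have "integral\<^sup>L mu (ebasis j) = integral TT (ebasis j)"
    by (rule cont_integral_mu) (auto intro: continuous_intros)
  also have "\<dots> = (if j = 0 then 2*pi else 0)"
  proof (cases "j = 0")
    case True
    then show ?thesis by (simp add: ebasis_def integral_const_real scaleR_conv_of_real)
  next
    case False
    define F where "F = (\<lambda>\<theta>::real. exp (\<i> * of_int j * of_real \<theta>) / (\<i> * of_int j))"
    have d: "(F has_vector_derivative ebasis j x) (at x within TT)" for x
    proof -
      have "((\<lambda>z. exp (\<i> * of_int j * z) / (\<i> * of_int j)) has_field_derivative
              exp (\<i> * of_int j * of_real x)) (at (of_real x))"
        using False by (auto intro!: derivative_eq_intros simp: field_simps)
      from has_vector_derivative_real_field[OF this] show ?thesis
        unfolding F_def ebasis_def .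
    qed
    have "(ebasis j has_integral F (2*pi) - F 0) TT"
      by (rule fundamental_theorem_of_calculus) (auto intro: d)
    moreover have "exp (\<i> * of_int j * of_real (2*pi)) = 1"
      using exp_integer_2pi[of "of_int j"] by (simp add: algebra_simps)
    ultimately have "(ebasis j has_integral 0) TT" by (simp add: F_def)
    then show ?thesis using False by (simp add: integral_unique)
  qed
  finally show ?thesis .
qed

lemma int_ebasis_cnj: "integral\<^sup>L mu (\<lambda>\<theta>. ebasis j \<theta> * cnj (ebasis m \<theta>)) = (if j = m then 2*pi else 0)"
  using int_ebasis[of "j - m"] by (simp add: ebasis_cnj ebasis_mult)

lemma integrable_bounded_mu:
  fixes f :: "real \<Rightarrow> 'a::{banach,second_countable_topology}"
  assumes "f \<in> borel_measurable mu" "\<And>x. x \<in> TT \<Longrightarrow> norm (f x) \<le> B"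
  shows "integrable mu f"
  by (rule finite_measure.integrable_const_bound[OF fin_mu, of f B]) (use assms in \<open>auto intro!: AE_I2\<close>)

lemma integrable_mult_bounded:
  fixes f g :: "real \<Rightarrow> complex"
  assumes "integrable mu f" "g \<in> borel_measurable mu" "\<And>x. x \<in> TT \<Longrightarrow> norm (g x) \<le> B"
  shows "integrable mu (\<lambda>x. f x * g x)" "integrable mu (\<lambda>x. g x * f x)"
proof -
  have Bnn: "0 \<le> B \<or> TT = {}" using assms(3) norm_ge_zero order_trans by blast
  have "integrable mu (\<lambda>x. B * norm (f x))" using assms(1) by auto
  moreover have "AE x in mu. norm (f x * g x) \<le> norm (B * norm (f x))"
  proof (rule AE_I2)
    fix x assume x: "x \<in> space mu"
    then have "norm (f x * g x) \<le> norm (f x) * B"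
      using assms(3) by (simp add: norm_mult mult_left_mono)
    also have "\<dots> \<le> norm (f x) * \<bar>B\<bar>" by (simp add: mult_left_mono)
    also have "\<dots> = norm (B * norm (f x))" by (simp add: abs_mult)
    finally show "norm (f x * g x) \<le> norm (B * norm (f x))" .
  qed
  moreover have "(\<lambda>x. f x * g x) \<in> borel_measurable mu"
  proof -
    have "f \<in> borel_measurable mu" using assms(1) by (rule borel_measurable_integrable)
    then show ?thesis using assms(2) by measurable
  qed
  ultimately show "integrable mu (\<lambda>x. f x * g x)"
    by (metis Bochner_Integration.integrable_bound)
  then show "integrable mu (\<lambda>x. g x * f x)" by (simp add: mult.commute)
qed

lemma L2_meas: "u \<in> L2T \<Longrightarrow> u \<in> borel_measurable mu" by (simp add: L2T_iff)
lemma L2_sq: "u \<in> L2T \<Longrightarrow> integrable mu (\<lambda>\<theta>. (cmod (u \<theta>))\<^sup>2)" by (simp add: L2T_iff)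

lemma le_one_plus_sq: fixes c :: real assumes "0 \<le> c" shows "c \<le> 1 + c\<^sup>2"
proof -
  have "0 \<le> (c - 1)\<^sup>2" by simp
  then have "2 * c \<le> c\<^sup>2 + 1" by (simp add: power2_diff)
  with assms show ?thesis by linarith
qed

lemma meas_sq[measurable]: "u \<in> borel_measurable mu \<Longrightarrow> (\<lambda>x. (cmod (u x))\<^sup>2) \<in> borel_measurable mu"
  by measurable

lemma cnj_borel[measurable]: "cnj \<in> borel_measurable borel"
  by (intro borel_measurable_continuous_onI continuous_intros)

lemma meas_cnj: "u \<in> borel_measurable mu \<Longrightarrow> (\<lambda>x. cnj (u x)) \<in> borel_measurable mu"
  by measurable

lemma int_one: "integrable mu (\<lambda>_. c::real)"
  by (rule integrable_bounded_mu[where B="\<bar>c\<bar>"]) auto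

lemma L2_integrable: assumes "u \<in> L2T" shows "integrable mu u"
proof -
  have i: "integrable mu (\<lambda>x. 1 + (cmod (u x))\<^sup>2)"
    by (rule Bochner_Integration.integrable_add[OF int_one L2_sq[OF assms]])
  have ae: "AE x in mu. norm (u x) \<le> norm (1 + (cmod (u x))\<^sup>2)"
  proof (rule AE_I2)
    fix x
    have "cmod (u x) \<le> 1 + (cmod (u x))\<^sup>2" by (rule le_one_plus_sq) simp
    then show "norm (u x) \<le> norm (1 + (cmod (u x))\<^sup>2)" by simp
  qed
  show ?thesis by (rule Bochner_Integration.integrable_bound[OF i L2_meas[OF assms] ae])
qed

lemma two_mult_le_sq: fixes a b :: real shows "2 * (a * b) \<le> a\<^sup>2 + b\<^sup>2"
proof -
  have "0 \<le> (a - b)\<^sup>2" by simp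
  then show ?thesis by (simp add: power2_diff)
qed

lemma norm_mult_le_sq: "cmod (a * b) \<le> (cmod a)\<^sup>2 + (cmod b)\<^sup>2"
proof -
  have "2 * (cmod a * cmod b) \<le> (cmod a)\<^sup>2 + (cmod b)\<^sup>2" by (rule two_mult_le_sq)
  moreover have "0 \<le> cmod a * cmod b" by simp
  ultimately have "cmod a * cmod b \<le> (cmod a)\<^sup>2 + (cmod b)\<^sup>2" by linarith
  then show ?thesis by (simp add: norm_mult)
qed

lemma L2_mult_integrable:
  assumes "u \<in> L2T" "v \<in> L2T" shows "integrable mu (\<lambda>x. u x * v x)"
proof -
  have i: "integrable mu (\<lambda>x. (cmod (u x))\<^sup>2 + (cmod (v x))\<^sup>2)"
    by (rule Bochner_Integration.integrable_add[OF L2_sq[OF assms(1)] L2_sq[OF assms(2)]])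
  have ae: "AE x in mu. norm (u x * v x) \<le> norm ((cmod (u x))\<^sup>2 + (cmod (v x))\<^sup>2)"
  proof (rule AE_I2)
    fix x show "norm (u x * v x) \<le> norm ((cmod (u x))\<^sup>2 + (cmod (v x))\<^sup>2)"
      using norm_mult_le_sq[of "u x" "v x"] by simp
  qed
  have m: "(\<lambda>x. u x * v x) \<in> borel_measurable mu"
    using L2_meas[OF assms(1)] L2_meas[OF assms(2)] by measurable
  show ?thesis by (rule Bochner_Integration.integrable_bound[OF i m ae])
qed

lemma L2_cnj: "u \<in> L2T \<Longrightarrow> (\<lambda>x. cnj (u x)) \<in> L2T"
  by (simp add: L2T_iff meas_cnj)

lemma L2_cong_AE:
  assumes "u \<in> L2T" "v \<in> borel_measurable mu" "AE x in mu. u x = v x"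
  shows "v \<in> L2T"
proof -
  have ae: "AE x in mu. (cmod (v x))\<^sup>2 = (cmod (u x))\<^sup>2"
    using assms(3) by eventually_elim simp
  have "integrable mu (\<lambda>\<theta>. (cmod (v \<theta>))\<^sup>2) = integrable mu (\<lambda>\<theta>. (cmod (u \<theta>))\<^sup>2)"
    by (rule integrable_cong_AE[OF meas_sq[OF assms(2)] meas_sq[OF L2_meas[OF assms(1)]] ae])
  with assms show ?thesis by (simp add: L2T_iff)
qed

lemma L2_bounded_mult:
  assumes "u \<in> L2T" "g \<in> borel_measurable mu" "\<And>x. x \<in> TT \<Longrightarrow> norm (g x) \<le> B"
  shows "(\<lambda>x. g x * u x) \<in> L2T"
proof -
  have i: "integrable mu (\<lambda>x. B\<^sup>2 * (cmod (u x))\<^sup>2)" using L2_sq[OF assms(1)] by simp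
  have ae: "AE x in mu. norm ((cmod (g x * u x))\<^sup>2) \<le> norm (B\<^sup>2 * (cmod (u x))\<^sup>2)"
  proof (rule AE_I2)
    fix x assume "x \<in> space mu"
    then have gx: "cmod (g x) \<le> B" using assms(3) by simp
    have "(cmod (g x))\<^sup>2 \<le> B\<^sup>2" by (rule power_mono[OF gx]) simp
    then have "(cmod (g x))\<^sup>2 * (cmod (u x))\<^sup>2 \<le> B\<^sup>2 * (cmod (u x))\<^sup>2"
      by (rule mult_right_mono) simp
    then show "norm ((cmod (g x * u x))\<^sup>2) \<le> norm (B\<^sup>2 * (cmod (u x))\<^sup>2)"
      by (simp add: norm_mult power_mult_distrib)
  qed
  have m1: "(\<lambda>x. g x * u x) \<in> borel_measurable mu"
    using L2_meas[OF assms(1)] assms(2) by measurable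
  have m: "(\<lambda>x. (cmod (g x * u x))\<^sup>2) \<in> borel_measurable mu"
    using m1 by (rule meas_sq)
  have "integrable mu (\<lambda>x. (cmod (g x * u x))\<^sup>2)"
    by (rule Bochner_Integration.integrable_bound[OF i m ae])
  with m1 show ?thesis by (simp add: L2T_iff)
qed

lemma L2_cmult: "u \<in> L2T \<Longrightarrow> (\<lambda>x. c * u x) \<in> L2T"
  using L2_bounded_mult[of u "\<lambda>_. c" "cmod c"] by simp

lemma L2_add:
  assumes "u \<in> L2T" "v \<in> L2T" shows "(\<lambda>x. u x + v x) \<in> L2T"
proof -
  have i: "integrable mu (\<lambda>x. 2 * (cmod (u x))\<^sup>2 + 2 * (cmod (v x))\<^sup>2)"
    using L2_sq[OF assms(1)] L2_sq[OF assms(2)] by simp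
  have ae: "AE x in mu. norm ((cmod (u x + v x))\<^sup>2) \<le> norm (2 * (cmod (u x))\<^sup>2 + 2 * (cmod (v x))\<^sup>2)"
  proof (rule AE_I2)
    fix x
    have t: "cmod (u x + v x) \<le> cmod (u x) + cmod (v x)" by (rule norm_triangle_ineq)
    have "(cmod (u x + v x))\<^sup>2 \<le> (cmod (u x) + cmod (v x))\<^sup>2" by (rule power_mono[OF t]) simp
    also have "\<dots> = (cmod (u x))\<^sup>2 + (cmod (v x))\<^sup>2 + 2 * (cmod (u x) * cmod (v x))"
      by (simp add: power2_sum)
    also have "\<dots> \<le> 2 * (cmod (u x))\<^sup>2 + 2 * (cmod (v x))\<^sup>2"
      using two_mult_le_sq[of "cmod (u x)" "cmod (v x)"] by linarith
    finally show "norm ((cmod (u x + v x))\<^sup>2) \<le> norm (2 * (cmod (u x))\<^sup>2 + 2 * (cmod (v x))\<^sup>2)" by simp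
  qed
  have m1: "(\<lambda>x. u x + v x) \<in> borel_measurable mu"
    using L2_meas[OF assms(1)] L2_meas[OF assms(2)] by measurable
  have m: "(\<lambda>x. (cmod (u x + v x))\<^sup>2) \<in> borel_measurable mu" using m1 by (rule meas_sq)
  have "integrable mu (\<lambda>x. (cmod (u x + v x))\<^sup>2)"
    by (rule Bochner_Integration.integrable_bound[OF i m ae])
  with m1 show ?thesis by (simp add: L2T_iff)
qed

lemma L2_diff: "u \<in> L2T \<Longrightarrow> v \<in> L2T \<Longrightarrow> (\<lambda>x. u x - v x) \<in> L2T"
  using L2_add[of u "\<lambda>x. (-1) * v x"] L2_cmult[of v "-1"] by simp

lemma L2_zero: "(\<lambda>x. 0) \<in> L2T" by (simp add: L2T_iff)

lemma L2_sum: "finite F \<Longrightarrow> (\<And>i. i \<in> F \<Longrightarrow> f i \<in> L2T) \<Longrightarrow> (\<lambda>x. \<Sum>i\<in>F. f i x) \<in> L2T"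
  by (induction F rule: finite_induct) (auto simp: L2_zero intro: L2_add)

lemma L2_ebasis: "ebasis j \<in> L2T"
  using L2_bounded_mult[of "\<lambda>_. 1" "ebasis j" 1] L2_cmult by (simp add: L2T_iff)

lemma L2_trig: "finite F \<Longrightarrow> (\<lambda>x. \<Sum>n\<in>F. b n * ebasis n x) \<in> L2T"
  by (intro L2_sum L2_cmult L2_ebasis)

lemma int_mult_cnj_ebasis: "integrable mu u \<Longrightarrow> integrable mu (\<lambda>\<theta>. u \<theta> * cnj (ebasis j \<theta>))"
  by (rule integrable_mult_bounded(1)[where B=1]) (auto intro: meas_cnj)

lemma int_mult_ebasis: "integrable mu u \<Longrightarrow> integrable mu (\<lambda>\<theta>. u \<theta> * ebasis j \<theta>)"
  by (rule integrable_mult_bounded(1)[where B=1]) auto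

lemma integral_eq_fcoeff: "integral\<^sup>L mu (\<lambda>\<theta>. u \<theta> * cnj (ebasis j \<theta>)) = 2 * pi * fcoeff u j"
  by (simp add: fcoeff_mu)

lemma fcoeff_add:
  assumes "integrable mu u" "integrable mu v"
  shows "fcoeff (\<lambda>x. u x + v x) j = fcoeff u j + fcoeff v j"
proof -
  have "integral\<^sup>L mu (\<lambda>\<theta>. (u \<theta> + v \<theta>) * cnj (ebasis j \<theta>)) =
        integral\<^sup>L mu (\<lambda>\<theta>. u \<theta> * cnj (ebasis j \<theta>) + v \<theta> * cnj (ebasis j \<theta>))"
    by (simp add: distrib_right)
  also have "\<dots> = integral\<^sup>L mu (\<lambda>\<theta>. u \<theta> * cnj (ebasis j \<theta>)) + integral\<^sup>L mu (\<lambda>\<theta>. v \<theta> * cnj (ebasis j \<theta>))"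
    by (rule Bochner_Integration.integral_add[OF int_mult_cnj_ebasis[OF assms(1)] int_mult_cnj_ebasis[OF assms(2)]])
  finally show ?thesis by (simp add: fcoeff_mu distrib_left)
qed

lemma fcoeff_cmult: "fcoeff (\<lambda>x. c * u x) j = c * fcoeff u j"
proof -
  have "integral\<^sup>L mu (\<lambda>\<theta>. c * u \<theta> * cnj (ebasis j \<theta>)) = c * integral\<^sup>L mu (\<lambda>\<theta>. u \<theta> * cnj (ebasis j \<theta>))"
    using integral_mult_right_zero[of mu c "\<lambda>\<theta>. u \<theta> * cnj (ebasis j \<theta>)"] by (simp add: mult.assoc)
  then show ?thesis by (simp add: fcoeff_mu)
qed

lemma fcoeff_diff:
  assumes "integrable mu u" "integrable mu v"
  shows "fcoeff (\<lambda>x. u x - v x) j = fcoeff u j - fcoeff v j"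
  using fcoeff_add[OF assms(1), of "\<lambda>x. (-1) * v x" j] fcoeff_cmult[of "-1" v j] assms(2)
  by simp

lemma fcoeff_sum:
  assumes "finite F" "\<And>i. i \<in> F \<Longrightarrow> integrable mu (f i)"
  shows "fcoeff (\<lambda>x. \<Sum>i\<in>F. f i x) j = (\<Sum>i\<in>F. fcoeff (f i) j)"
  using assms
proof (induction F rule: finite_induct)
  case empty
  then show ?case by (simp add: fcoeff_mu)
next
  case (insert a F)
  have "fcoeff (\<lambda>x. \<Sum>i\<in>insert a F. f i x) j = fcoeff (\<lambda>x. f a x + (\<Sum>i\<in>F. f i x)) j"
    using insert by simp
  also have "\<dots> = fcoeff (f a) j + fcoeff (\<lambda>x. \<Sum>i\<in>F. f i x) j"
    by (rule fcoeff_add) (use insert in \<open>auto intro!: Bochner_Integration.integrable_sum\<close>)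
  finally show ?case using insert by simp
qed

lemma fcoeff_ebasis: "fcoeff (ebasis n) m = (if n = m then 1 else 0)"
  by (simp add: fcoeff_mu int_ebasis_cnj)

lemma ebasis_integrable: "integrable mu (ebasis n)"
  by (rule L2_integrable[OF L2_ebasis])

lemma fcoeff_trig:
  assumes "finite F"
  shows "fcoeff (\<lambda>\<theta>. \<Sum>n\<in>F. b n * ebasis n \<theta>) m = (if m \<in> F then b m else 0)"
proof -
  have "fcoeff (\<lambda>\<theta>. \<Sum>n\<in>F. b n * ebasis n \<theta>) m = (\<Sum>n\<in>F. fcoeff (\<lambda>\<theta>. b n * ebasis n \<theta>) m)"
    by (rule fcoeff_sum[OF assms]) (auto intro: ebasis_integrable)
  also have "\<dots> = (\<Sum>n\<in>F. b n * (if n = m then 1 else 0))"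
    by (simp add: fcoeff_cmult fcoeff_ebasis)
  also have "\<dots> = (if m \<in> F then b m else 0)"
    using assms by (simp add: if_distrib sum.delta' cong: if_cong)
  finally show ?thesis .
qed

lemma fcoeff_cong:
  assumes "u \<in> borel_measurable mu" "v \<in> borel_measurable mu" "AE x in mu. u x = v x"
  shows "fcoeff u j = fcoeff v j"
proof -
  have "integral\<^sup>L mu (\<lambda>\<theta>. u \<theta> * cnj (ebasis j \<theta>)) = integral\<^sup>L mu (\<lambda>\<theta>. v \<theta> * cnj (ebasis j \<theta>))"
  proof -
    have ae: "AE x in mu. u x * cnj (ebasis j x) = v x * cnj (ebasis j x)"
      using assms(3) by eventually_elim simp
    have m1: "(\<lambda>x. u x * cnj (ebasis j x)) \<in> borel_measurable mu"
      using assms(1) meas_cnj[OF ebasis_meas] by (rule borel_measurable_times)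
    have m2: "(\<lambda>x. v x * cnj (ebasis j x)) \<in> borel_measurable mu"
      using assms(2) meas_cnj[OF ebasis_meas] by (rule borel_measurable_times)
    show ?thesis by (rule integral_cong_AE[OF m1 m2 ae])
  qed
  then show ?thesis by (simp add: fcoeff_mu)
qed

lemma fcoeff_bound:
  assumes "integrable mu u"
  shows "cmod (fcoeff u j) \<le> integral\<^sup>L mu (\<lambda>x. cmod (u x)) / (2*pi)"
proof -
  have "cmod (integral\<^sup>L mu (\<lambda>\<theta>. u \<theta> * cnj (ebasis j \<theta>))) \<le> integral\<^sup>L mu (\<lambda>\<theta>. cmod (u \<theta> * cnj (ebasis j \<theta>)))"
    by (rule integral_norm_bound)
  also have "\<dots> = integral\<^sup>L mu (\<lambda>x. cmod (u x))" by (simp add: norm_mult)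
  moreover have "cmod (fcoeff u j) = cmod (integral\<^sup>L mu (\<lambda>\<theta>. u \<theta> * cnj (ebasis j \<theta>))) / (2*pi)"
    by (simp add: fcoeff_mu norm_mult norm_divide)
  ultimately show ?thesis by (simp add: divide_right_mono)
qed

lemma int_sq_complex: "complex_of_real (integral\<^sup>L mu (\<lambda>x. (cmod (f x))\<^sup>2)) = integral\<^sup>L mu (\<lambda>x. f x * cnj (f x))"
proof -
  have e: "(\<lambda>x. complex_of_real ((cmod (f x))\<^sup>2)) = (\<lambda>x. f x * cnj (f x))"
    by (rule ext) (rule complex_norm_square)
  have "complex_of_real (integral\<^sup>L mu (\<lambda>x. (cmod (f x))\<^sup>2)) = integral\<^sup>L mu (\<lambda>x. complex_of_real ((cmod (f x))\<^sup>2))"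
    by (rule integral_complex_of_real[symmetric])
  also have "\<dots> = integral\<^sup>L mu (\<lambda>x. f x * cnj (f x))" by (simp only: e)
  finally show ?thesis .
qed

lemma sum_cnj_sq: "(\<Sum>j\<in>F. cnj (b j) * b j) = complex_of_real (\<Sum>j\<in>F. (cmod (b j))\<^sup>2)"
proof -
  have "\<And>j. cnj (b j) * b j = complex_of_real ((cmod (b j))\<^sup>2)"
    by (subst complex_norm_square) (simp add: mult.commute)
  then show ?thesis by (simp only: of_real_sum)
qed

lemma int_u_cnj_trig:
  assumes "integrable mu u" "finite F"
  shows "integral\<^sup>L mu (\<lambda>x. u x * cnj (\<Sum>j\<in>F. b j * ebasis j x)) = 2 * pi * (\<Sum>j\<in>F. cnj (b j) * fcoeff u j)"
proof -
  have "integral\<^sup>L mu (\<lambda>x. u x * cnj (\<Sum>j\<in>F. b j * ebasis j x)) =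
        integral\<^sup>L mu (\<lambda>x. \<Sum>j\<in>F. cnj (b j) * (u x * cnj (ebasis j x)))"
    by (simp add: sum_distrib_left mult_ac)
  also have "\<dots> = (\<Sum>j\<in>F. integral\<^sup>L mu (\<lambda>x. cnj (b j) * (u x * cnj (ebasis j x))))"
    by (rule Bochner_Integration.integral_sum) (use int_mult_cnj_ebasis[OF assms(1)] in auto)
  also have "\<dots> = (\<Sum>j\<in>F. cnj (b j) * (2 * pi * fcoeff u j))"
    by (simp add: integral_eq_fcoeff)
  finally show ?thesis by (simp add: sum_distrib_left mult_ac)
qed

lemma int_trig_sq:
  assumes "finite F"
  shows "integral\<^sup>L mu (\<lambda>x. (cmod (\<Sum>j\<in>F. b j * ebasis j x))\<^sup>2) = 2 * pi * (\<Sum>j\<in>F. (cmod (b j))\<^sup>2)"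
proof -
  let ?T = "\<lambda>x. \<Sum>j\<in>F. b j * ebasis j x"
  have "complex_of_real (integral\<^sup>L mu (\<lambda>x. (cmod (?T x))\<^sup>2)) = integral\<^sup>L mu (\<lambda>x. ?T x * cnj (?T x))"
    by (rule int_sq_complex)
  also have "\<dots> = 2 * pi * (\<Sum>j\<in>F. cnj (b j) * fcoeff ?T j)"
    by (rule int_u_cnj_trig[OF L2_integrable[OF L2_trig[OF assms]] assms])
  also have "\<dots> = 2 * pi * (\<Sum>j\<in>F. cnj (b j) * b j)"
    using assms by (simp add: fcoeff_trig)
  also have "\<dots> = complex_of_real (2 * pi * (\<Sum>j\<in>F. (cmod (b j))\<^sup>2))"
    by (simp only: sum_cnj_sq of_real_mult)
  finally show ?thesis by (simp only: of_real_eq_iff)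
qed

lemma bessel_identity:
  assumes "u \<in> L2T" "finite F"
  defines "T \<equiv> (\<lambda>x. \<Sum>j\<in>F. fcoeff u j * ebasis j x)"
  shows "integral\<^sup>L mu (\<lambda>x. (cmod (u x - T x))\<^sup>2) = integral\<^sup>L mu (\<lambda>x. (cmod (u x))\<^sup>2) - 2 * pi * (\<Sum>j\<in>F. (cmod (fcoeff u j))\<^sup>2)"
proof -
  have uL: "integrable mu u" by (rule L2_integrable[OF assms(1)])
  have TL2: "T \<in> L2T" unfolding T_def by (rule L2_trig[OF assms(2)])
  have TL: "integrable mu T" by (rule L2_integrable[OF TL2])
  let ?s = "2 * pi * (\<Sum>j\<in>F. (cmod (fcoeff u j))\<^sup>2)"
  have i1: "integrable mu (\<lambda>x. u x * cnj (u x))" by (rule L2_mult_integrable[OF assms(1) L2_cnj[OF assms(1)]])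
  have i2: "integrable mu (\<lambda>x. u x * cnj (T x))" by (rule L2_mult_integrable[OF assms(1) L2_cnj[OF TL2]])
  have i3: "integrable mu (\<lambda>x. T x * cnj (u x))" by (rule L2_mult_integrable[OF TL2 L2_cnj[OF assms(1)]])
  have i4: "integrable mu (\<lambda>x. T x * cnj (T x))" by (rule L2_mult_integrable[OF TL2 L2_cnj[OF TL2]])
  have e2: "integral\<^sup>L mu (\<lambda>x. u x * cnj (T x)) = complex_of_real ?s"
    unfolding T_def using int_u_cnj_trig[OF uL assms(2), of "fcoeff u"]
    by (simp only: sum_cnj_sq of_real_mult)
  have e3: "integral\<^sup>L mu (\<lambda>x. T x * cnj (u x)) = complex_of_real ?s"
  proof -
    have "integral\<^sup>L mu (\<lambda>x. T x * cnj (u x)) = integral\<^sup>L mu (\<lambda>x. cnj (u x * cnj (T x)))" by (simp add: mult.commute)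
    also have "\<dots> = cnj (integral\<^sup>L mu (\<lambda>x. u x * cnj (T x)))" using Bochner_Integration.integral_cnj[of mu "\<lambda>x. u x * cnj (T x)"] by simp
    finally show ?thesis using e2 by simp
  qed
  have e4: "integral\<^sup>L mu (\<lambda>x. T x * cnj (T x)) = complex_of_real ?s"
    using int_trig_sq[OF assms(2), of "fcoeff u"] int_sq_complex[of T] unfolding T_def by simp
  have "complex_of_real (integral\<^sup>L mu (\<lambda>x. (cmod (u x - T x))\<^sup>2)) =
        integral\<^sup>L mu (\<lambda>x. (u x - T x) * cnj (u x - T x))"
    by (rule int_sq_complex)
  also have "\<dots> = integral\<^sup>L mu (\<lambda>x. (u x * cnj (u x) - u x * cnj (T x)) - (T x * cnj (u x) - T x * cnj (T x)))"
    by (simp add: algebra_simps)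
  also have "\<dots> = (integral\<^sup>L mu (\<lambda>x. u x * cnj (u x)) - integral\<^sup>L mu (\<lambda>x. u x * cnj (T x))) -
        (integral\<^sup>L mu (\<lambda>x. T x * cnj (u x)) - integral\<^sup>L mu (\<lambda>x. T x * cnj (T x)))"
    using i1 i2 i3 i4 by simp
  also have "\<dots> = complex_of_real (integral\<^sup>L mu (\<lambda>x. (cmod (u x))\<^sup>2)) - complex_of_real ?s"
    using e2 e3 e4 int_sq_complex[of u] by simp
  finally show ?thesis by (simp only: of_real_diff[symmetric] of_real_eq_iff)
qed

lemma bessel_ineq:
  assumes "u \<in> L2T" "finite F"
  shows "2 * pi * (\<Sum>j\<in>F. (cmod (fcoeff u j))\<^sup>2) \<le> integral\<^sup>L mu (\<lambda>x. (cmod (u x))\<^sup>2)"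
proof -
  have "0 \<le> integral\<^sup>L mu (\<lambda>x. (cmod (u x - (\<Sum>j\<in>F. fcoeff u j * ebasis j x)))\<^sup>2)"
    by (rule integral_nonneg_AE) simp
  then show ?thesis using bessel_identity[OF assms] by simp
qed

definition tpl :: "(int \<times> complex) list \<Rightarrow> real \<Rightarrow> complex" where
  "tpl xs \<theta> = (\<Sum>(j,c)\<leftarrow>xs. c * ebasis j \<theta>)"

lemma tpl_Nil[simp]: "tpl [] \<theta> = 0" by (simp add: tpl_def)
lemma tpl_Cons[simp]: "tpl ((j,c)#xs) \<theta> = c * ebasis j \<theta> + tpl xs \<theta>" by (simp add: tpl_def)
lemma tpl_append: "tpl (xs @ ys) \<theta> = tpl xs \<theta> + tpl ys \<theta>" by (simp add: tpl_def)

lemma tpl_cmult: "tpl (map (\<lambda>(j,c). (j, a*c)) xs) \<theta> = a * tpl xs \<theta>"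
  by (induction xs) (auto simp: algebra_simps)

lemma tpl_mult1: "tpl (map (\<lambda>(l,d). (j+l, c*d)) ys) \<theta> = c * ebasis j \<theta> * tpl ys \<theta>"
proof (induction ys)
  case Nil then show ?case by simp
next
  case (Cons a ys)
  obtain l d where a: "a = (l,d)" by (cases a)
  have "ebasis (j+l) \<theta> = ebasis j \<theta> * ebasis l \<theta>" by (simp add: ebasis_mult)
  then show ?case using Cons a by (simp add: algebra_simps)
qed

lemma tpl_mult: "tpl (concat (map (\<lambda>(j,c). map (\<lambda>(l,d). (j+l, c*d)) ys) xs)) \<theta> = tpl xs \<theta> * tpl ys \<theta>"
proof (induction xs)
  case Nil then show ?case by simp
next
  case (Cons a xs)
  obtain j c where a: "a = (j,c)" by (cases a)
  show ?case using Cons a by (simp add: tpl_append tpl_mult1 distrib_right)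
qed

lemma tpl_cont: "continuous_on A (tpl xs)"
proof (induction xs)
  case Nil then show ?case by (simp add: tpl_def)
next
  case (Cons a xs)
  obtain j c where a: "a = (j,c)" by (cases a)
  have e: "tpl (a#xs) = (\<lambda>\<theta>. c * ebasis j \<theta> + tpl xs \<theta>)" using a by (simp add: fun_eq_iff)
  show ?case unfolding e by (intro continuous_intros Cons)
qed

lemma tpl_meas: "tpl xs \<in> borel_measurable mu"
  by (rule cont_meas_mu[OF tpl_cont])

lemma tpl_bound: "cmod (tpl xs \<theta>) \<le> (\<Sum>(j,c)\<leftarrow>xs. cmod c)"
proof (induction xs)
  case Nil then show ?case by simp
next
  case (Cons a xs)
  obtain j c where a: "a = (j,c)" by (cases a)
  have "cmod (tpl (a#xs) \<theta>) \<le> cmod (c * ebasis j \<theta>) + cmod (tpl xs \<theta>)"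
    using a norm_triangle_ineq by simp
  also have "\<dots> \<le> cmod c + (\<Sum>(j,c)\<leftarrow>xs. cmod c)" using Cons by (simp add: norm_mult)
  finally show ?case using a by simp
qed

lemma int_g_ebasis:
  assumes "\<forall>j. fcoeff g j = 0"
  shows "integral\<^sup>L mu (\<lambda>\<theta>. g \<theta> * ebasis j \<theta>) = 0"
proof -
  have "integral\<^sup>L mu (\<lambda>\<theta>. g \<theta> * ebasis j \<theta>) = integral\<^sup>L mu (\<lambda>\<theta>. g \<theta> * cnj (ebasis (-j) \<theta>))"
    by (simp add: ebasis_cnj)
  also have "\<dots> = 2 * pi * fcoeff g (-j)" by (rule integral_eq_fcoeff)
  finally show ?thesis using assms by simp
qed

lemma int_g_tpl_integrable: "integrable mu g \<Longrightarrow> integrable mu (\<lambda>\<theta>. g \<theta> * tpl xs \<theta>)"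
  by (rule integrable_mult_bounded(1)[OF _ tpl_meas tpl_bound])

lemma int_g_tpl:
  assumes "integrable mu g" "\<forall>j. fcoeff g j = 0"
  shows "integral\<^sup>L mu (\<lambda>\<theta>. g \<theta> * tpl xs \<theta>) = 0"
proof (induction xs)
  case Nil then show ?case by simp
next
  case (Cons a xs)
  obtain j c where a: "a = (j,c)" by (cases a)
  have "integral\<^sup>L mu (\<lambda>\<theta>. g \<theta> * tpl (a#xs) \<theta>) = integral\<^sup>L mu (\<lambda>\<theta>. c * (g \<theta> * ebasis j \<theta>) + g \<theta> * tpl xs \<theta>)"
    using a by (simp add: algebra_simps)
  also have "\<dots> = integral\<^sup>L mu (\<lambda>\<theta>. c * (g \<theta> * ebasis j \<theta>)) + integral\<^sup>L mu (\<lambda>\<theta>. g \<theta> * tpl xs \<theta>)"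
    by (rule Bochner_Integration.integral_add)
      (use int_mult_ebasis[OF assms(1)] int_g_tpl_integrable[OF assms(1)] in auto)
  also have "\<dots> = 0" using Cons int_g_ebasis[OF assms(2)] by simp
  finally show ?case .
qed

lemma ebasis_cis: "ebasis j \<theta> = cis (of_int j * \<theta>)"
  by (simp add: ebasis_def cis_conv_exp mult_ac)

lemma rpf_circle:
  assumes "real_polynomial_function p"
  shows "\<exists>xs. \<forall>\<theta>. complex_of_real (p (exp (\<i> * of_real \<theta>))) = tpl xs \<theta>"
  using assms
proof (induction rule: real_polynomial_function.induct)
  case (linear f)
  have lin: "f z = Re z * f 1 + Im z * f \<i>" for z
  proof -
    have "z = Re z *\<^sub>R 1 + Im z *\<^sub>R \<i>" by (simp add: complex_eq_iff)
    then have "f z = f (Re z *\<^sub>R 1 + Im z *\<^sub>R \<i>)" by simp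
    also have "\<dots> = Re z * f 1 + Im z * f \<i>"
      using linear linear_simps(1)[OF linear] linear_cmul[OF bounded_linear.linear[OF linear]] by simp
    finally show ?thesis .
  qed
  define A where "A = complex_of_real (f 1)"
  define B where "B = complex_of_real (f \<i>)"
  have "complex_of_real (f (exp (\<i> * of_real \<theta>))) = tpl [(1, (A - \<i>*B)/2), (-1, (A + \<i>*B)/2)] \<theta>" for \<theta>
  proof -
    define c where "c = complex_of_real (cos \<theta>)"
    define s where "s = complex_of_real (sin \<theta>)"
    have e1: "ebasis 1 \<theta> = c + \<i> * s" unfolding ebasis_cis c_def s_def by (simp add: complex_eq_iff)
    have e2: "ebasis (-1) \<theta> = c - \<i> * s" unfolding ebasis_cis c_def s_def by (simp add: complex_eq_iff)
    have ex: "exp (\<i> * of_real \<theta>) = cis \<theta>" by (simp add: cis_conv_exp)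
    have l: "complex_of_real (f (exp (\<i> * of_real \<theta>))) = A * c + B * s"
      unfolding ex by (subst lin) (simp add: A_def B_def c_def s_def)
    have "(A - \<i> * B) / 2 * (c + \<i> * s) + (A + \<i> * B) / 2 * (c - \<i> * s) = A * c + B * s"
      by (simp add: field_simps)
    then show ?thesis using l e1 e2 by simp
  qed
  then show ?case by blast
next
  case (const c)
  have "complex_of_real c = tpl [(0, complex_of_real c)] \<theta>" for \<theta> by (simp add: ebasis_def)
  then show ?case by blast
next
  case (add f g)
  then obtain xs ys where "\<forall>\<theta>. complex_of_real (f (exp (\<i> * of_real \<theta>))) = tpl xs \<theta>"
    "\<forall>\<theta>. complex_of_real (g (exp (\<i> * of_real \<theta>))) = tpl ys \<theta>" by blast
  then have "\<forall>\<theta>. complex_of_real (f (exp (\<i> * of_real \<theta>)) + g (exp (\<i> * of_real \<theta>))) = tpl (xs @ ys) \<theta>"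
    by (simp add: tpl_append)
  then show ?case by blast
next
  case (mult f g)
  then obtain xs ys where "\<forall>\<theta>. complex_of_real (f (exp (\<i> * of_real \<theta>))) = tpl xs \<theta>"
    "\<forall>\<theta>. complex_of_real (g (exp (\<i> * of_real \<theta>))) = tpl ys \<theta>" by blast
  then have "\<forall>\<theta>. complex_of_real (f (exp (\<i> * of_real \<theta>)) * g (exp (\<i> * of_real \<theta>))) =
       tpl (concat (map (\<lambda>(j,c). map (\<lambda>(l,d). (j+l, c*d)) ys) xs)) \<theta>"
    by (simp add: tpl_mult)
  then show ?case by blast
qed

lemma pf_circle:
  fixes h :: "complex \<Rightarrow> complex"
  assumes "polynomial_function h"
  shows "\<exists>xs. \<forall>\<theta>. h (exp (\<i> * of_real \<theta>)) = tpl xs \<theta>"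
proof -
  have r1: "real_polynomial_function (Re \<circ> h)"
    using assms bounded_linear_Re unfolding polynomial_function_def by blast
  have r2: "real_polynomial_function (Im \<circ> h)"
    using assms bounded_linear_Im unfolding polynomial_function_def by blast
  obtain xs where xs: "\<And>\<theta>. complex_of_real ((Re \<circ> h) (exp (\<i> * of_real \<theta>))) = tpl xs \<theta>"
    using rpf_circle[OF r1] by blast
  obtain ys where ys: "\<And>\<theta>. complex_of_real ((Im \<circ> h) (exp (\<i> * of_real \<theta>))) = tpl ys \<theta>"
    using rpf_circle[OF r2] by blast
  have "h (exp (\<i> * of_real \<theta>)) = tpl (xs @ map (\<lambda>(j,c). (j, \<i>*c)) ys) \<theta>" for \<theta>
  proof -
    have "h (exp (\<i> * of_real \<theta>)) = complex_of_real ((Re \<circ> h) (exp (\<i> * of_real \<theta>))) +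
          \<i> * complex_of_real ((Im \<circ> h) (exp (\<i> * of_real \<theta>)))"
      unfolding o_def by (rule complex_eq)
    also have "\<dots> = tpl xs \<theta> + \<i> * tpl ys \<theta>" by (simp only: xs ys)
    also have "\<dots> = tpl (xs @ map (\<lambda>(j,c). (j, \<i>*c)) ys) \<theta>"
      by (simp only: tpl_append tpl_cmult)
    finally show ?thesis .
  qed
  then show ?thesis by blast
qed


lemma exp_i_eq:
  assumes "\<theta> \<in> TT" "\<theta>' \<in> TT" "exp (\<i> * of_real \<theta>) = exp (\<i> * of_real \<theta>')"
  shows "\<theta> = \<theta>' \<or> (\<theta> = 0 \<and> \<theta>' = 2*pi) \<or> (\<theta> = 2*pi \<and> \<theta>' = 0)"
proof -
  obtain n :: int where "\<i> * of_real \<theta> = \<i> * of_real \<theta>' + complex_of_real (real_of_int (2 * n) * pi) * \<i>"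
    using assms(3) exp_eq by blast
  then have "Im (\<i> * of_real \<theta>) = Im (\<i> * of_real \<theta>' + complex_of_real (real_of_int (2 * n) * pi) * \<i>)"
    by simp
  then have d: "\<theta> - \<theta>' = real_of_int n * (2*pi)" by simp
  have b: "0 \<le> \<theta>" "\<theta> \<le> 2*pi" "0 \<le> \<theta>'" "\<theta>' \<le> 2*pi" using assms(1,2) by auto
  have "real_of_int n * (2*pi) \<le> 1 * (2*pi)" using d b by linarith
  then have "real_of_int n \<le> 1" by (rule mult_right_le_imp_le) simp
  then have n1: "n \<le> 1" by simp
  have "(-1) * (2*pi) \<le> real_of_int n * (2*pi)" using d b by linarith
  then have "-1 \<le> real_of_int n" by (rule mult_right_le_imp_le) simp
  then have n2: "-1 \<le> n" by simp
  have "n = -1 \<or> n = 0 \<or> n = 1" using n1 n2 by linarith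
  then show ?thesis using d assms(1,2) by auto
qed

lemma exp_i_sphere: "exp (\<i> * complex_of_real \<theta>) \<in> sphere 0 1"
  by (simp add: norm_exp_eq_Re)

lemma exp_i_image: "(\<lambda>\<theta>. exp (\<i> * complex_of_real \<theta>)) ` TT = sphere 0 1"
proof
  show "(\<lambda>\<theta>. exp (\<i> * complex_of_real \<theta>)) ` TT \<subseteq> sphere 0 1" using exp_i_sphere by blast
next
  show "sphere 0 1 \<subseteq> (\<lambda>\<theta>. exp (\<i> * complex_of_real \<theta>)) ` TT"
  proof
    fix z :: complex assume "z \<in> sphere 0 1"
    then have nz: "cmod z = 1" by simp
    have "z = exp (\<i> * complex_of_real (Arg2pi z))"
      using Arg2pi_eq[of z] nz by simp
    moreover have "Arg2pi z \<in> TT" using Arg2pi_ge_0[of z] Arg2pi_lt_2pi[of z] by simp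
    ultimately show "z \<in> (\<lambda>\<theta>. exp (\<i> * complex_of_real \<theta>)) ` TT" by blast
  qed
qed

lemma lift_circle:
  fixes \<psi> :: "real \<Rightarrow> complex"
  assumes "continuous_on TT \<psi>" "\<psi> 0 = \<psi> (2*pi)"
  obtains \<Phi> where "continuous_on (sphere 0 1) \<Phi>" "\<And>\<theta>. \<theta> \<in> TT \<Longrightarrow> \<Phi> (exp (\<i> * of_real \<theta>)) = \<psi> \<theta>"
proof -
  define f where "f = (\<lambda>\<theta>::real. exp (\<i> * complex_of_real \<theta>))"
  define \<Phi> where "\<Phi> z = \<psi> (SOME \<theta>. \<theta> \<in> TT \<and> f \<theta> = z)" for z
  have key: "\<Phi> (f \<theta>) = \<psi> \<theta>" if "\<theta> \<in> TT" for \<theta>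
  proof -
    have "\<exists>\<theta>'. \<theta>' \<in> TT \<and> f \<theta>' = f \<theta>" using that by blast
    then have s: "(SOME \<theta>'. \<theta>' \<in> TT \<and> f \<theta>' = f \<theta>) \<in> TT \<and> f (SOME \<theta>'. \<theta>' \<in> TT \<and> f \<theta>' = f \<theta>) = f \<theta>"
      by (rule someI_ex)
    define \<theta>' where "\<theta>' = (SOME \<theta>'. \<theta>' \<in> TT \<and> f \<theta>' = f \<theta>)"
    have "\<theta>' = \<theta> \<or> (\<theta>' = 0 \<and> \<theta> = 2*pi) \<or> (\<theta>' = 2*pi \<and> \<theta> = 0)"
      using exp_i_eq[of \<theta>' \<theta>] s that unfolding \<theta>'_def f_def by blast
    then have "\<psi> \<theta>' = \<psi> \<theta>" using assms(2) by auto
    then show ?thesis unfolding \<Phi>_def \<theta>'_def by simp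
  qed
  have img: "f ` TT = sphere 0 1" unfolding f_def by (rule exp_i_image)
  have fc: "continuous_on TT f" unfolding f_def by (intro continuous_intros)
  have qm: "quotient_map (top_of_set TT) (top_of_set (sphere 0 1)) f"
  proof (rule T1_Spaces.continuous_imp_quotient_map)
    show "continuous_map (top_of_set TT) (top_of_set (sphere 0 1)) f"
      using fc img by (auto simp: continuous_map_subtopology_eu)
    show "compact_space (top_of_set TT)"
      by (rule compact_space_subtopology) (simp add: compactin_euclidean_iff)
    show "Hausdorff_space (top_of_set (sphere (0::complex) 1))"
      by (rule Hausdorff_space_subtopology) (rule Hausdorff_space_euclidean)
    show "f ` topspace (top_of_set TT) = topspace (top_of_set (sphere 0 1))"
      using img by simp
  qed
  have "continuous_on TT (\<Phi> \<circ> f)"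
    using assms(1) by (rule continuous_on_eq) (simp add: key)
  then have "continuous_map (top_of_set TT) euclidean (\<Phi> \<circ> f)" by simp
  then have "continuous_map (top_of_set (sphere 0 1)) euclidean \<Phi>"
    by (rule continuous_compose_quotient_map[OF qm])
  then have "continuous_on (sphere 0 1) \<Phi>" by simp
  moreover have "\<And>\<theta>. \<theta> \<in> TT \<Longrightarrow> \<Phi> (exp (\<i> * of_real \<theta>)) = \<psi> \<theta>"
    using key unfolding f_def by simp
  ultimately show ?thesis using that by blast
qed

lemma cont_bounded:
  fixes \<psi> :: "real \<Rightarrow> complex"
  assumes "continuous_on TT \<psi>"
  obtains B where "\<And>x. x \<in> TT \<Longrightarrow> cmod (\<psi> x) \<le> B"
proof -
  have "compact (\<psi> ` TT)" by (rule compact_continuous_image[OF assms]) simp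
  then have "bounded (\<psi> ` TT)" by (rule compact_imp_bounded)
  then obtain B where "\<forall>y\<in>\<psi> ` TT. norm y \<le> B" by (auto simp: bounded_iff)
  then show ?thesis using that by blast
qed

lemma int_g_cont_periodic:
  assumes g: "integrable mu g" "\<forall>j. fcoeff g j = 0"
    and psi: "continuous_on TT \<psi>" "\<psi> 0 = \<psi> (2*pi)"
  shows "integral\<^sup>L mu (\<lambda>\<theta>. g \<theta> * \<psi> \<theta>) = 0"
proof -
  obtain \<Phi> where \<Phi>: "continuous_on (sphere 0 1) \<Phi>" "\<And>\<theta>. \<theta> \<in> TT \<Longrightarrow> \<Phi> (exp (\<i> * of_real \<theta>)) = \<psi> \<theta>"
    using lift_circle[OF psi] by blast
  obtain B where B: "\<And>x. x \<in> TT \<Longrightarrow> cmod (\<psi> x) \<le> B" using cont_bounded[OF psi(1)] by blast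
  have gpsi: "integrable mu (\<lambda>\<theta>. g \<theta> * \<psi> \<theta>)"
    by (rule integrable_mult_bounded(1)[OF g(1) cont_meas_mu[OF psi(1)] B])
  let ?I = "integral\<^sup>L mu (\<lambda>x. cmod (g x))"
  have I0: "0 \<le> ?I" by (rule integral_nonneg_AE) simp
  have main: "cmod (integral\<^sup>L mu (\<lambda>\<theta>. g \<theta> * \<psi> \<theta>)) \<le> \<epsilon> * ?I" if eps: "\<epsilon> > 0" for \<epsilon>
  proof -
    obtain h where h: "polynomial_function h" "\<forall>z\<in>sphere 0 1. norm (\<Phi> z - h z) < \<epsilon>"
      using Stone_Weierstrass_polynomial_function[OF compact_sphere \<Phi>(1) eps] by blast
    obtain xs where xs: "\<forall>\<theta>. h (exp (\<i> * of_real \<theta>)) = tpl xs \<theta>" using pf_circle[OF h(1)] by blast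
    have close: "cmod (\<psi> \<theta> - tpl xs \<theta>) \<le> \<epsilon>" if "\<theta> \<in> TT" for \<theta>
    proof -
      have "cmod (\<Phi> (exp (\<i> * of_real \<theta>)) - h (exp (\<i> * of_real \<theta>))) < \<epsilon>"
        using h(2) exp_i_sphere by blast
      then show ?thesis using \<Phi>(2)[OF that] xs by simp
    qed
    have gT: "integrable mu (\<lambda>\<theta>. g \<theta> * tpl xs \<theta>)" by (rule int_g_tpl_integrable[OF g(1)])
    have "integral\<^sup>L mu (\<lambda>\<theta>. g \<theta> * (\<psi> \<theta> - tpl xs \<theta>)) =
          integral\<^sup>L mu (\<lambda>\<theta>. g \<theta> * \<psi> \<theta> - g \<theta> * tpl xs \<theta>)"
      by (simp add: right_diff_distrib)
    also have "\<dots> = integral\<^sup>L mu (\<lambda>\<theta>. g \<theta> * \<psi> \<theta>) - integral\<^sup>L mu (\<lambda>\<theta>. g \<theta> * tpl xs \<theta>)"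
      by (rule Bochner_Integration.integral_diff[OF gpsi gT])
    also have "\<dots> = integral\<^sup>L mu (\<lambda>\<theta>. g \<theta> * \<psi> \<theta>)" using int_g_tpl[OF g] by simp
    finally have eq: "integral\<^sup>L mu (\<lambda>\<theta>. g \<theta> * \<psi> \<theta>) = integral\<^sup>L mu (\<lambda>\<theta>. g \<theta> * (\<psi> \<theta> - tpl xs \<theta>))" ..
    have i2: "integrable mu (\<lambda>\<theta>. g \<theta> * (\<psi> \<theta> - tpl xs \<theta>))"
      using Bochner_Integration.integrable_diff[OF gpsi gT] by (simp add: right_diff_distrib)
    have "cmod (integral\<^sup>L mu (\<lambda>\<theta>. g \<theta> * (\<psi> \<theta> - tpl xs \<theta>))) \<le> integral\<^sup>L mu (\<lambda>\<theta>. cmod (g \<theta> * (\<psi> \<theta> - tpl xs \<theta>)))"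
      by (rule integral_norm_bound)
    also have "\<dots> \<le> integral\<^sup>L mu (\<lambda>\<theta>. \<epsilon> * cmod (g \<theta>))"
    proof (rule integral_mono)
      show "integrable mu (\<lambda>\<theta>. cmod (g \<theta> * (\<psi> \<theta> - tpl xs \<theta>)))" using i2 by simp
      show "integrable mu (\<lambda>\<theta>. \<epsilon> * cmod (g \<theta>))" using g(1) by simp
      fix \<theta> assume "\<theta> \<in> space mu"
      then have "cmod (\<psi> \<theta> - tpl xs \<theta>) \<le> \<epsilon>" using close by simp
      then have "cmod (g \<theta>) * cmod (\<psi> \<theta> - tpl xs \<theta>) \<le> cmod (g \<theta>) * \<epsilon>"
        by (rule mult_left_mono) simp
      then show "cmod (g \<theta> * (\<psi> \<theta> - tpl xs \<theta>)) \<le> \<epsilon> * cmod (g \<theta>)"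
        by (simp add: norm_mult mult.commute)
    qed
    also have "\<dots> = \<epsilon> * ?I" by simp
    finally show ?thesis using eq by simp
  qed
  have "cmod (integral\<^sup>L mu (\<lambda>\<theta>. g \<theta> * \<psi> \<theta>)) \<le> 0"
  proof (rule field_le_epsilon)
    fix e :: real assume e: "0 < e"
    have "0 < ?I + 1" using I0 by linarith
    then have "0 < e / (?I + 1)" using e by (rule divide_pos_pos[rotated])
    from main[OF this] have "cmod (integral\<^sup>L mu (\<lambda>\<theta>. g \<theta> * \<psi> \<theta>)) \<le> e / (?I + 1) * ?I" .
    also have "\<dots> \<le> e"
    proof -
      have p: "0 < ?I + 1" using I0 by linarith
      have "e / (?I + 1) * ?I = e * (?I / (?I + 1))" by simp
      also have "\<dots> \<le> e * 1" using p e I0 by (intro mult_left_mono) (simp_all add: divide_le_eq_1 p)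
      finally show ?thesis by simp
    qed
    finally show "cmod (integral\<^sup>L mu (\<lambda>\<theta>. g \<theta> * \<psi> \<theta>)) \<le> 0 + e" by simp
  qed
  then show ?thesis by simp
qed

lemma sets_mu_iff: "A \<in> sets mu \<longleftrightarrow> A \<subseteq> TT \<and> A \<in> sets lebesgue"
  by (simp add: sets_restrict_space_iff)

lemma AE_mu_interior: "AE x in mu. x \<in> {0<..<2*pi}"
proof -
  have "{0, 2*pi} \<in> null_sets lborel" by (rule finite_imp_null_set_lborel) simp
  then have "{0, 2*pi} \<in> null_sets lebesgue" by (rule null_sets_completionI)
  then have "AE x in lebesgue. x \<notin> {0, 2*pi}" by (rule AE_not_in)
  then have "AE x in lebesgue. x \<in> TT \<longrightarrow> x \<in> {0<..<2*pi}"
    by eventually_elim auto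
  then show ?thesis by (subst AE_restrict_space_iff) simp_all
qed

lemma int_g_indicator:
  assumes g: "integrable mu g" "\<forall>j. fcoeff g j = 0" and A: "A \<in> sets mu"
  shows "integral\<^sup>L mu (\<lambda>x. indicator A x *\<^sub>R g x) = 0"
proof -
  define Oi where "Oi = {0<..<2*pi::real}"
  define A' where "A' = A \<inter> Oi"
  have AL: "A \<in> sets lebesgue" "A \<subseteq> TT" using A sets_mu_iff by auto
  have OL: "Oi \<in> sets lebesgue" unfolding Oi_def by simp
  have A'L: "A' \<in> sets lebesgue" unfolding A'_def using AL(1) OL by blast
  have A'sub: "A' \<subseteq> TT" "A' \<subseteq> Oi" using AL(2) unfolding A'_def Oi_def by auto
  have eps: "(0::real) < (1/2)^n" for n :: nat by simp
  have "\<exists>K. closed K \<and> K \<subseteq> A' \<and> A' - K \<in> lmeasurable \<and> emeasure lebesgue (A' - K) < ennreal ((1/2)^n)" for n :: nat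
  proof -
    obtain T where "closed T" "T \<subseteq> A'" "A' - T \<in> lmeasurable" "emeasure lebesgue (A' - T) < ennreal ((1/2)^n)"
      by (rule sets_lebesgue_inner_closed[OF A'L eps])
    then show ?thesis by blast
  qed
  then obtain K :: "nat \<Rightarrow> real set" where K: "\<And>n. closed (K n) \<and> K n \<subseteq> A' \<and> A' - K n \<in> lmeasurable \<and> emeasure lebesgue (A' - K n) < ennreal ((1/2)^n)"
    by metis
  have "\<exists>U. open U \<and> A' \<subseteq> U \<and> U - A' \<in> lmeasurable \<and> emeasure lebesgue (U - A') < ennreal ((1/2)^n)" for n :: nat
  proof -
    obtain T where "open T" "A' \<subseteq> T" "T - A' \<in> lmeasurable" "emeasure lebesgue (T - A') < ennreal ((1/2)^n)"
      by (rule sets_lebesgue_outer_open[OF A'L eps])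
    then show ?thesis by blast
  qed
  then obtain U :: "nat \<Rightarrow> real set" where U: "\<And>n. open (U n) \<and> A' \<subseteq> U n \<and> U n - A' \<in> lmeasurable \<and> emeasure lebesgue (U n - A') < ennreal ((1/2)^n)"
    by metis
  define V where "V n = U n \<inter> Oi" for n
  have Vopen: "open (V n)" for n using U[of n] unfolding V_def Oi_def by auto
  have KV: "K n \<subseteq> V n" for n using K[of n] U[of n] A'sub unfolding V_def by auto
  have "\<exists>f::real\<Rightarrow>real. continuous_on UNIV f \<and> (\<forall>x. f x \<in> closed_segment 1 0) \<and>
          (\<forall>x\<in>K n. f x = 1) \<and> (\<forall>x\<in>- V n. f x = 0)" for n
  proof -
    have c1: "closed (K n)" using K by blast
    have c2: "closed (- V n)" using Vopen by (simp add: closed_Compl)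
    have d: "K n \<inter> - V n = {}" using KV by blast
    obtain f :: "real \<Rightarrow> real" where "continuous_on UNIV f" "\<And>x. f x \<in> closed_segment 1 0"
      "\<And>x. x \<in> K n \<Longrightarrow> f x = 1" "\<And>x. x \<in> - V n \<Longrightarrow> f x = 0"
      using Urysohn[OF c1 c2 d, where a="1::real" and b=0] by blast
    then show ?thesis by blast
  qed
  then obtain F :: "nat \<Rightarrow> real \<Rightarrow> real" where F: "\<And>n. continuous_on UNIV (F n) \<and> (\<forall>x. F n x \<in> closed_segment 1 0) \<and>
          (\<forall>x\<in>K n. F n x = 1) \<and> (\<forall>x\<in>- V n. F n x = 0)"
    by metis
  have F01: "0 \<le> F n x \<and> F n x \<le> 1" for n x
    using F[of n] by (auto simp: closed_segment_eq_real_ivl)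
  define \<psi> where "\<psi> n x = complex_of_real (F n x)" for n x
  have \<psi>cont: "continuous_on TT (\<psi> n)" for n
    unfolding \<psi>_def using F[of n] by (auto intro!: continuous_intros intro: continuous_on_subset)
  have \<psi>0: "\<psi> n 0 = 0" "\<psi> n (2*pi) = 0" for n
    using F[of n] unfolding \<psi>_def V_def Oi_def by auto
  have int0: "integral\<^sup>L mu (\<lambda>x. g x * \<psi> n x) = 0" for n
    by (rule int_g_cont_periodic[OF g \<psi>cont]) (simp add: \<psi>0)
  define E where "E n = (V n - K n) \<inter> TT" for n
  have EL: "E n \<in> sets lebesgue" for n
  proof -
    have "V n \<in> sets lebesgue" using Vopen by simp
    moreover have "K n \<in> sets lebesgue" using K by simp
    ultimately show ?thesis unfolding E_def by auto
  qed
  have Emu: "E n \<in> sets mu" for n using EL unfolding sets_mu_iff E_def by auto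
  have Ele: "emeasure mu (E n) \<le> ennreal (2 * (1/2)^n)" for n
  proof -
    have s1: "U n - A' \<in> sets lebesgue" using U[of n] by (auto dest: fmeasurableD)
    have s2: "A' - K n \<in> sets lebesgue" using K[of n] by (auto dest: fmeasurableD)
    have "emeasure mu (E n) = emeasure lebesgue (E n)"
      by (rule emeasure_restrict_space) (auto simp: E_def)
    also have "\<dots> \<le> emeasure lebesgue ((U n - A') \<union> (A' - K n))"
      by (rule emeasure_mono) (use s1 s2 in \<open>auto simp: E_def V_def\<close>)
    also have "\<dots> \<le> emeasure lebesgue (U n - A') + emeasure lebesgue (A' - K n)"
      by (rule emeasure_subadditive[OF s1 s2])
    also have "\<dots> \<le> ennreal ((1/2)^n) + ennreal ((1/2)^n)"
      using U[of n] K[of n] by (intro add_mono) auto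
    also have "\<dots> = ennreal (2 * (1/2)^n)" by (simp add: ennreal_plus[symmetric])
    finally show ?thesis .
  qed
  have Emeas: "measure mu (E n) \<le> 2 * (1/2)^n" for n
    unfolding measure_def by (rule enn2real_leI) (simp_all add: Ele)
  have Efin: "emeasure mu (E n) < \<infinity>" for n
    using Ele[of n] by (simp add: le_less_trans)
  have summ: "summable (\<lambda>n. measure mu (E n))"
  proof (rule summable_comparison_test)
    show "\<exists>N. \<forall>n\<ge>N. norm (measure mu (E n)) \<le> 2 * (1/2)^n" using Emeas by simp
    show "summable (\<lambda>n. 2 * (1/2::real)^n)" by (intro summable_mult summable_geometric) simp
  qed
  have BC: "AE x in mu. eventually (\<lambda>n. x \<in> space mu - E n) sequentially"
    by (rule borel_cantelli_AE1[OF Emu Efin summ])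
  have conv: "AE x in mu. (\<lambda>n. g x * \<psi> n x) \<longlonglongrightarrow> g x * complex_of_real (indicator A' x)"
    using BC
  proof eventually_elim
    case (elim x)
    have xT: "x \<in> TT" using elim by (auto elim: eventually_mono simp: eventually_sequentially)
    have ev: "eventually (\<lambda>n. \<psi> n x = complex_of_real (indicator A' x)) sequentially"
    proof (cases "x \<in> A'")
      case True
      have "x \<in> V n" for n using True U[of n] A'sub unfolding V_def by auto
      then have "eventually (\<lambda>n. x \<in> K n) sequentially"
        using elim xT by (auto elim!: eventually_mono simp: E_def)
      then show ?thesis using True F unfolding \<psi>_def by (auto elim!: eventually_mono)
    next
      case False
      have "x \<notin> K n" for n using False K[of n] by auto
      then have "eventually (\<lambda>n. x \<notin> V n) sequentially"
        using elim xT by (auto elim!: eventually_mono simp: E_def)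
      then show ?thesis using False F unfolding \<psi>_def by (auto elim!: eventually_mono)
    qed
    show ?case
      by (rule tendsto_eventually) (use ev in \<open>auto elim!: eventually_mono\<close>)
  qed
  have gm: "g \<in> borel_measurable mu" using g(1) by (rule borel_measurable_integrable)
  have A'mu: "A' \<in> sets mu" using A'L A'sub unfolding sets_mu_iff by auto
  have lim: "(\<lambda>n. integral\<^sup>L mu (\<lambda>x. g x * \<psi> n x)) \<longlonglongrightarrow> integral\<^sup>L mu (\<lambda>x. g x * complex_of_real (indicator A' x))"
  proof (rule integral_dominated_convergence[where w="\<lambda>x. cmod (g x)"])
    show "(\<lambda>x. g x * complex_of_real (indicator A' x)) \<in> borel_measurable mu"
      using gm A'mu by measurable
    show "(\<lambda>x. g x * \<psi> n x) \<in> borel_measurable mu" for n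
      using gm cont_meas_mu[OF \<psi>cont[of n]] by (rule borel_measurable_times)
    show "integrable mu (\<lambda>x. cmod (g x))" using g(1) by simp
    show "AE x in mu. (\<lambda>n. g x * \<psi> n x) \<longlonglongrightarrow> g x * complex_of_real (indicator A' x)" by (rule conv)
    show "AE x in mu. norm (g x * \<psi> n x) \<le> cmod (g x)" for n
    proof (rule AE_I2)
      fix x
      have "cmod (\<psi> n x) \<le> 1" using F01[of n x] unfolding \<psi>_def by simp
      then have "cmod (g x) * cmod (\<psi> n x) \<le> cmod (g x) * 1" by (rule mult_left_mono) simp
      then show "norm (g x * \<psi> n x) \<le> cmod (g x)" by (simp add: norm_mult)
    qed
  qed
  then have "(\<lambda>n. 0::complex) \<longlonglongrightarrow> integral\<^sup>L mu (\<lambda>x. g x * complex_of_real (indicator A' x))"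
    using int0 by simp
  then have I0: "integral\<^sup>L mu (\<lambda>x. g x * complex_of_real (indicator A' x)) = 0"
    using LIMSEQ_unique tendsto_const by blast
  have "integral\<^sup>L mu (\<lambda>x. indicator A x *\<^sub>R g x) = integral\<^sup>L mu (\<lambda>x. g x * complex_of_real (indicator A' x))"
  proof (rule integral_cong_AE)
    show "(\<lambda>x. indicator A x *\<^sub>R g x) \<in> borel_measurable mu" using gm A by measurable
    show "(\<lambda>x. g x * complex_of_real (indicator A' x)) \<in> borel_measurable mu" using gm A'mu by measurable
    show "AE x in mu. indicator A x *\<^sub>R g x = g x * complex_of_real (indicator A' x)"
      using AE_mu_interior
    proof eventually_elim
      case (elim x)
      then show ?case unfolding A'_def Oi_def by (simp add: indicator_def scaleR_conv_of_real)
    qed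
  qed
  then show ?thesis using I0 by simp
qed

lemma fourier_unique:
  assumes "integrable mu g" "\<forall>j. fcoeff g j = 0"
  shows "AE x in mu. g x = 0"
proof -
  have "AE x in mu. g x = (\<lambda>_. 0) x"
  proof (rule sigma_finite_measure.density_unique_banach[OF finite_measure.axioms(1)[OF fin_mu] assms(1)])
    show "integrable mu (\<lambda>_. 0::complex)" by simp
    fix A assume "A \<in> sets mu"
    then show "set_lebesgue_integral mu A g = set_lebesgue_integral mu A (\<lambda>_. 0)"
      unfolding set_lebesgue_integral_def using int_g_indicator[OF assms] by simp
  qed
  then show ?thesis by simp
qed

lemma L1_eq_coeffs:
  assumes "integrable mu u" "integrable mu v" "\<forall>j. fcoeff u j = fcoeff v j"
  shows "AE x in mu. u x = v x"
proof -
  have "integrable mu (\<lambda>x. u x - v x)" using assms(1,2) by simp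
  moreover have "\<forall>j. fcoeff (\<lambda>x. u x - v x) j = 0"
    using fcoeff_diff[OF assms(1,2)] assms(3) by simp
  ultimately have "AE x in mu. u x - v x = 0" by (rule fourier_unique)
  then show ?thesis by eventually_elim simp
qed

lemma int_const_mu: "integral\<^sup>L mu (\<lambda>_. c::real) = 2*pi*c"
proof -
  have "integral\<^sup>L mu (\<lambda>_. c::real) = integral TT (\<lambda>_. c)"
    by (rule cont_integral_mu(2)) simp
  then show ?thesis by (simp add: integral_const_real)
qed

lemma measure_mu: "measure mu TT = 2*pi"
  using int_const_mu[of 1] by simp

lemma L1_le_L2:
  assumes hm: "h \<in> borel_measurable mu" and hi: "integrable mu (\<lambda>x. (cmod (h x))\<^sup>2)" and d: "\<delta> > 0"
  shows "integral\<^sup>L mu (\<lambda>x. cmod (h x)) \<le> 2*pi*\<delta> + integral\<^sup>L mu (\<lambda>x. (cmod (h x))\<^sup>2) / \<delta>"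
proof -
  have hL2: "h \<in> L2T" using hm hi by (simp add: L2T_iff)
  have pw: "cmod (h x) \<le> \<delta> + (cmod (h x))\<^sup>2 / \<delta>" for x
  proof -
    define c where "c = cmod (h x)"
    have c0: "0 \<le> c" unfolding c_def by simp
    have "2 * (c * \<delta>) \<le> c\<^sup>2 + \<delta>\<^sup>2" by (rule two_mult_le_sq)
    moreover have "c * \<delta> \<le> 2 * (c * \<delta>)" using c0 d by simp
    ultimately have "c * \<delta> \<le> \<delta>\<^sup>2 + c\<^sup>2" by linarith
    then have "c * \<delta> \<le> \<delta> * \<delta> + c\<^sup>2" by (simp add: power2_eq_square)
    then have "c \<le> (\<delta> * \<delta> + c\<^sup>2) / \<delta>" using d by (simp add: pos_le_divide_eq)
    moreover have "(\<delta> * \<delta> + c\<^sup>2) / \<delta> = \<delta> + c\<^sup>2 / \<delta>" using d by (simp add: add_divide_distrib)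
    ultimately have "c \<le> \<delta> + c\<^sup>2 / \<delta>" by simp
    then show ?thesis unfolding c_def .
  qed
  have "integral\<^sup>L mu (\<lambda>x. cmod (h x)) \<le> integral\<^sup>L mu (\<lambda>x. \<delta> + (cmod (h x))\<^sup>2 / \<delta>)"
    by (rule integral_mono) (use L2_integrable[OF hL2] hi pw int_one in auto)
  also have "\<dots> = integral\<^sup>L mu (\<lambda>x. \<delta>) + integral\<^sup>L mu (\<lambda>x. (cmod (h x))\<^sup>2 / \<delta>)"
    by (rule Bochner_Integration.integral_add) (use hi int_one in auto)
  also have "\<dots> = 2*pi*\<delta> + integral\<^sup>L mu (\<lambda>x. (cmod (h x))\<^sup>2) / \<delta>"
    by (simp add: measure_mu integral_divide_zero)
  finally show ?thesis .
qed

lemma tail_small: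
  fixes b :: "int \<Rightarrow> real"
  assumes summ: "b summable_on UNIV" and nn: "\<And>j. 0 \<le> b j" and e: "e > 0"
  shows "\<exists>m0. \<forall>m\<ge>m0. infsum b UNIV - (\<Sum>j\<in>{-int m..int m}. b j) < e"
proof -
  have "(sum b \<longlongrightarrow> infsum b UNIV) (finite_subsets_at_top UNIV)"
    using summ has_sum_def has_sum_infsum by blast
  then have "eventually (\<lambda>F. dist (sum b F) (infsum b UNIV) < e) (finite_subsets_at_top UNIV)"
    using e by (rule tendstoD)
  then obtain X where X: "finite X" "\<And>Y. finite Y \<and> X \<subseteq> Y \<and> Y \<subseteq> UNIV \<Longrightarrow> dist (sum b Y) (infsum b UNIV) < e"
    unfolding eventually_finite_subsets_at_top by blast
  define m0 where "m0 = nat (Max (insert 0 (abs ` X)))"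
  have XW: "X \<subseteq> {-int m..int m}" if "m \<ge> m0" for m
  proof
    fix j assume j: "j \<in> X"
    have "\<bar>j\<bar> \<le> Max (insert 0 (abs ` X))" using X(1) j by (intro Max_ge) auto
    moreover have "0 \<le> Max (insert 0 (abs ` X))" using X(1) by (intro Max_ge) auto
    ultimately have "\<bar>j\<bar> \<le> int m0" unfolding m0_def by simp
    then show "j \<in> {-int m..int m}" using that by (simp add: abs_le_iff)
  qed
  have "dist (sum b X) (infsum b UNIV) < e" using X by blast
  then have Xe: "infsum b UNIV - sum b X < e" by (simp add: dist_real_def)
  show ?thesis
  proof (intro exI allI impI)
    fix m assume "m0 \<le> m"
    then have "sum b X \<le> (\<Sum>j\<in>{-int m..int m}. b j)" using XW nn by (intro sum_mono2) auto
    then show "infsum b UNIV - (\<Sum>j\<in>{-int m..int m}. b j) < e" using Xe by linarith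
  qed
qed

lemma riesz_fischer:
  fixes b :: "int \<Rightarrow> complex"
  assumes summ: "(\<lambda>j. (cmod (b j))\<^sup>2) summable_on UNIV"
  shows "\<exists>f\<in>L2T. (\<forall>j. fcoeff f j = b j) \<and>
           integral\<^sup>L mu (\<lambda>x. (cmod (f x))\<^sup>2) = 2*pi*infsum (\<lambda>j. (cmod (b j))\<^sup>2) UNIV"
proof -
  define s where "s = infsum (\<lambda>j. (cmod (b j))\<^sup>2) UNIV"
  define W where "W m = {-int m..int m}" for m :: nat
  define P where "P m = (\<Sum>j\<in>W m. (cmod (b j))\<^sup>2)" for m
  define S where "S m x = (\<Sum>j\<in>W m. b j * ebasis j x)" for m x
  have Wfin: "finite (W m)" for m unfolding W_def by simp
  have Wmono: "m \<le> n \<Longrightarrow> W m \<subseteq> W n" for m n unfolding W_def by auto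
  have Ple: "P m \<le> s" for m
    unfolding P_def s_def by (rule finite_sum_le_infsum[OF summ Wfin]) auto
  have P0: "0 \<le> s - P m" for m using Ple[of m] by simp
  have tail: "\<exists>m0. \<forall>m\<ge>m0. s - P m < e" if "e > 0" for e
    using tail_small[OF summ _ that] unfolding s_def P_def W_def by simp
  have SL2: "S m \<in> L2T" for m unfolding S_def by (rule L2_trig[OF Wfin])
  have Sdiff: "integral\<^sup>L mu (\<lambda>x. (cmod (S n x - S m x))\<^sup>2) = 2*pi*(P n - P m)" if "m \<le> n" for m n
  proof -
    have "S n x - S m x = (\<Sum>j\<in>W n - W m. b j * ebasis j x)" for x
      unfolding S_def using Wmono[OF that] Wfin by (simp add: sum_diff)
    then have "integral\<^sup>L mu (\<lambda>x. (cmod (S n x - S m x))\<^sup>2) = 2*pi*(\<Sum>j\<in>W n - W m. (cmod (b j))\<^sup>2)"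
      using int_trig_sq[of "W n - W m" b] Wfin by simp
    also have "\<dots> = 2*pi*(P n - P m)"
      unfolding P_def using Wmono[OF that] Wfin by (simp add: sum_diff)
    finally show ?thesis .
  qed
  have Scauchy: "integral\<^sup>L mu (\<lambda>x. (cmod (S n x - S m x))\<^sup>2) \<le> 2*pi*(s - P (min m n))" for m n
  proof (cases "m \<le> n")
    case True
    then show ?thesis using Sdiff[OF True] Ple[of n] by (simp add: min_def)
  next
    case False
    then have "n \<le> m" by simp
    moreover have "(\<lambda>x. (cmod (S n x - S m x))\<^sup>2) = (\<lambda>x. (cmod (S m x - S n x))\<^sup>2)"
      by (simp add: norm_minus_commute)
    ultimately show ?thesis using Sdiff[of n m] Ple[of m] False by (simp add: min_def)
  qed
  have Smeas: "S m \<in> borel_measurable mu" for m by (rule L2_meas[OF SL2])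
  have Ssq: "integrable mu (\<lambda>x. (cmod (S n x - S m x))\<^sup>2)" for m n
    by (rule L2_sq[OF L2_diff[OF SL2 SL2]])
  have L1c: "\<exists>N. \<forall>i\<ge>N. \<forall>j\<ge>N. LINT x|mu. norm (S i x - S j x) < e" if e: "e > 0" for e
  proof -
    define \<delta> where "\<delta> = e / (4*pi)"
    have d: "\<delta> > 0" unfolding \<delta>_def using e by simp
    define \<eta> where "\<eta> = e * \<delta> / (4*pi)"
    have eta: "\<eta> > 0" unfolding \<eta>_def using e d by simp
    obtain m0 where m0: "\<And>m. m \<ge> m0 \<Longrightarrow> s - P m < \<eta>" using tail[OF eta] by blast
    show ?thesis
    proof (intro exI allI impI)
      fix i j assume ij: "m0 \<le> i" "m0 \<le> j"
      have "integral\<^sup>L mu (\<lambda>x. (cmod (S i x - S j x))\<^sup>2) \<le> 2*pi*(s - P (min j i))" by (rule Scauchy)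
      also have "\<dots> < 2*pi*\<eta>" using m0[of "min j i"] ij by simp
      finally have q: "integral\<^sup>L mu (\<lambda>x. (cmod (S i x - S j x))\<^sup>2) < 2*pi*\<eta>" .
      have "LINT x|mu. norm (S i x - S j x) \<le> 2*pi*\<delta> + integral\<^sup>L mu (\<lambda>x. (cmod (S i x - S j x))\<^sup>2) / \<delta>"
        by (rule L1_le_L2[OF _ Ssq d]) (use Smeas in measurable)
      also have "\<dots> < 2*pi*\<delta> + 2*pi*\<eta> / \<delta>"
        using q d by (simp add: divide_strict_right_mono)
      also have "\<dots> = e" unfolding \<eta>_def \<delta>_def using e by (simp add: field_simps)
      finally show "LINT x|mu. norm (S i x - S j x) < e" .
    qed
  qed
  obtain r where r: "strict_mono r" "AE x in mu. Cauchy (\<lambda>i. S (r i) x)"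
    using cauchy_L1_AE_cauchy_subseq[of mu S] L2_integrable[OF SL2] Smeas L1c by blast
  define f where "f x = lim (\<lambda>i. S (r i) x)" for x
  have fm: "f \<in> borel_measurable mu" unfolding f_def
    by (rule borel_measurable_lim_metric) (rule Smeas)
  have fconv: "AE x in mu. (\<lambda>i. S (r i) x) \<longlonglongrightarrow> f x"
    using r(2) by eventually_elim (simp add: f_def Cauchy_convergent_iff convergent_LIMSEQ_iff)
  have fS: "integrable mu (\<lambda>x. (cmod (f x - S m x))\<^sup>2) \<and>
            integral\<^sup>L mu (\<lambda>x. (cmod (f x - S m x))\<^sup>2) \<le> 2*pi*(s - P m)" for m
  proof -
    define u where "u i x = ennreal ((cmod (S (r i) x - S m x))\<^sup>2)" for i x
    have um: "u i \<in> borel_measurable mu" for i unfolding u_def using Smeas by measurable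
    have ae: "AE x in mu. ennreal ((cmod (f x - S m x))\<^sup>2) = liminf (\<lambda>i. u i x)"
      using fconv
    proof eventually_elim
      case (elim x)
      have "(\<lambda>i. (cmod (S (r i) x - S m x))\<^sup>2) \<longlonglongrightarrow> (cmod (f x - S m x))\<^sup>2"
        by (intro tendsto_intros elim)
      then have "(\<lambda>i. u i x) \<longlonglongrightarrow> ennreal ((cmod (f x - S m x))\<^sup>2)"
        unfolding u_def by (rule tendsto_ennrealI)
      then show ?case by (simp add: lim_imp_Liminf)
    qed
    have bnd: "integral\<^sup>N mu (u i) \<le> ennreal (2*pi*(s - P m))" if "m \<le> i" for i
    proof -
      have "m \<le> r i" using that seq_suble[OF r(1), of i] by simp
      have "integral\<^sup>N mu (u i) = ennreal (integral\<^sup>L mu (\<lambda>x. (cmod (S (r i) x - S m x))\<^sup>2))"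
        unfolding u_def by (rule nn_integral_eq_integral[OF Ssq]) simp
      also have "\<dots> \<le> ennreal (2*pi*(s - P m))"
        using Scauchy[of "r i" m] \<open>m \<le> r i\<close> by (intro ennreal_leI) (simp add: min_def)
      finally show ?thesis .
    qed
    have "(\<integral>\<^sup>+ x. ennreal ((cmod (f x - S m x))\<^sup>2) \<partial>mu) = (\<integral>\<^sup>+ x. liminf (\<lambda>i. u i x) \<partial>mu)"
      by (rule nn_integral_cong_AE[OF ae])
    also have "\<dots> \<le> liminf (\<lambda>i. integral\<^sup>N mu (u i))"
      by (rule nn_integral_liminf[OF um])
    also have "\<dots> \<le> ennreal (2*pi*(s - P m))"
      by (rule Liminf_le) (use bnd in \<open>auto simp: eventually_sequentially\<close>)
    finally have nn: "(\<integral>\<^sup>+ x. ennreal ((cmod (f x - S m x))\<^sup>2) \<partial>mu) \<le> ennreal (2*pi*(s - P m))" .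
    have dm: "(\<lambda>x. (cmod (f x - S m x))\<^sup>2) \<in> borel_measurable mu" using fm Smeas by measurable
    have int: "integrable mu (\<lambda>x. (cmod (f x - S m x))\<^sup>2)"
    proof (rule integrableI_bounded[OF dm])
      have "(\<integral>\<^sup>+ x. ennreal (norm ((cmod (f x - S m x))\<^sup>2)) \<partial>mu) = (\<integral>\<^sup>+ x. ennreal ((cmod (f x - S m x))\<^sup>2) \<partial>mu)"
        by simp
      also have "\<dots> < \<infinity>" using nn by (simp add: le_less_trans)
      finally show "(\<integral>\<^sup>+ x. ennreal (norm ((cmod (f x - S m x))\<^sup>2)) \<partial>mu) < \<infinity>" .
    qed
    have "ennreal (integral\<^sup>L mu (\<lambda>x. (cmod (f x - S m x))\<^sup>2)) \<le> ennreal (2*pi*(s - P m))"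
      using nn nn_integral_eq_integral[OF int] by simp
    then have "integral\<^sup>L mu (\<lambda>x. (cmod (f x - S m x))\<^sup>2) \<le> 2*pi*(s - P m)"
      using P0[of m] by (simp add: ennreal_le_iff)
    with int show ?thesis by blast
  qed
  have hL2: "(\<lambda>x. f x - S 0 x) \<in> L2T"
    using fS[of 0] fm Smeas by (simp add: L2T_iff)
  have fL2: "f \<in> L2T"
    using L2_add[OF hL2 SL2[of 0]] by simp
  have fLm: "(\<lambda>x. f x - S m x) \<in> L2T" for m by (rule L2_diff[OF fL2 SL2])
  have coef: "fcoeff f j = b j" for j
  proof -
    have "cmod (fcoeff f j - b j) \<le> 0"
    proof (rule field_le_epsilon)
      fix e :: real assume e: "0 < e"
      define \<delta> where "\<delta> = e / 2"
      have d: "\<delta> > 0" unfolding \<delta>_def using e by simp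
      have eta: "\<delta> * \<delta> > 0" using d by simp
      obtain m0 where m0: "\<And>m. m \<ge> m0 \<Longrightarrow> s - P m < \<delta> * \<delta>" using tail[OF eta] by blast
      define m where "m = max m0 (nat \<bar>j\<bar>)"
      have jW: "j \<in> W m" unfolding W_def m_def by auto
      have "fcoeff (\<lambda>x. f x - S m x) j = fcoeff f j - fcoeff (S m) j"
        by (rule fcoeff_diff[OF L2_integrable[OF fL2] L2_integrable[OF SL2]])
      moreover have "fcoeff (S m) j = b j"
        unfolding S_def using fcoeff_trig[OF Wfin[of m], of b j] jW by (simp add: S_def)
      ultimately have eq: "fcoeff f j - b j = fcoeff (\<lambda>x. f x - S m x) j" by simp
      have "cmod (fcoeff (\<lambda>x. f x - S m x) j) \<le> integral\<^sup>L mu (\<lambda>x. cmod (f x - S m x)) / (2*pi)"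
        by (rule fcoeff_bound[OF L2_integrable[OF fLm]])
      also have "\<dots> \<le> (2*pi*\<delta> + integral\<^sup>L mu (\<lambda>x. (cmod (f x - S m x))\<^sup>2) / \<delta>) / (2*pi)"
        by (intro divide_right_mono L1_le_L2[OF _ _ d]) (use fm Smeas fS in \<open>auto\<close>)
      also have "\<dots> \<le> (2*pi*\<delta> + 2*pi*(\<delta>*\<delta>) / \<delta>) / (2*pi)"
      proof -
        have "integral\<^sup>L mu (\<lambda>x. (cmod (f x - S m x))\<^sup>2) \<le> 2*pi*(s - P m)" using fS by blast
        also have "\<dots> \<le> 2*pi*(\<delta>*\<delta>)" using m0[of m] unfolding m_def by simp
        finally show ?thesis using d by (intro divide_right_mono add_left_mono) (simp_all add: divide_right_mono)
      qed
      also have "\<dots> = e" unfolding \<delta>_def by (simp add: field_simps)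
      finally show "cmod (fcoeff f j - b j) \<le> 0 + e" using eq by simp
    qed
    then show ?thesis by simp
  qed
  have bess: "integral\<^sup>L mu (\<lambda>x. (cmod (f x - S m x))\<^sup>2) = integral\<^sup>L mu (\<lambda>x. (cmod (f x))\<^sup>2) - 2*pi*P m" for m
    using bessel_identity[OF fL2 Wfin, of m] unfolding P_def S_def by (simp add: coef)
  have up: "integral\<^sup>L mu (\<lambda>x. (cmod (f x))\<^sup>2) \<le> 2*pi * s"
    using bess[of 0] fS[of 0] by (simp add: algebra_simps)
  have low: "2*pi * s \<le> integral\<^sup>L mu (\<lambda>x. (cmod (f x))\<^sup>2)"
  proof (rule field_le_epsilon)
    fix e :: real assume e: "0 < e"
    have "e / (2*pi) > 0" using e by simp
    then obtain m0 where m0: "\<And>m. m \<ge> m0 \<Longrightarrow> s - P m < e / (2*pi)" using tail by blast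
    have "0 \<le> integral\<^sup>L mu (\<lambda>x. (cmod (f x - S m0 x))\<^sup>2)" by (rule integral_nonneg_AE) simp
    then have "2*pi*P m0 \<le> integral\<^sup>L mu (\<lambda>x. (cmod (f x))\<^sup>2)" using bess[of m0] by simp
    moreover have "2*pi * s < 2*pi*P m0 + e"
    proof -
      have "2*pi*(s - P m0) < 2*pi*(e/(2*pi))" using m0[of m0] by (simp add: pos_less_divide_eq mult.commute)
      then show ?thesis by (simp add: algebra_simps)
    qed
    ultimately show "2*pi * s \<le> integral\<^sup>L mu (\<lambda>x. (cmod (f x))\<^sup>2) + e" by linarith
  qed
  show ?thesis using fL2 coef up low unfolding s_def by (intro bexI[of _ f]) auto
qed

lemma bessel_summable:
  assumes "u \<in> L2T"
  shows "(\<lambda>j. (cmod (fcoeff u j))\<^sup>2) summable_on UNIV"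
    "2*pi*infsum (\<lambda>j. (cmod (fcoeff u j))\<^sup>2) UNIV \<le> integral\<^sup>L mu (\<lambda>x. (cmod (u x))\<^sup>2)"
proof -
  have b: "(\<Sum>j\<in>F. (cmod (fcoeff u j))\<^sup>2) \<le> integral\<^sup>L mu (\<lambda>x. (cmod (u x))\<^sup>2) / (2*pi)" if "finite F" for F
    using bessel_ineq[OF assms that] by (simp add: field_simps)
  show s: "(\<lambda>j. (cmod (fcoeff u j))\<^sup>2) summable_on UNIV"
    by (rule nonneg_bdd_above_summable_on) (use b in \<open>auto intro!: bdd_aboveI\<close>)
  have "infsum (\<lambda>j. (cmod (fcoeff u j))\<^sup>2) UNIV \<le> integral\<^sup>L mu (\<lambda>x. (cmod (u x))\<^sup>2) / (2*pi)"
    by (rule infsum_le_finite_sums[OF s]) (use b in auto)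
  then show "2*pi*infsum (\<lambda>j. (cmod (fcoeff u j))\<^sup>2) UNIV \<le> integral\<^sup>L mu (\<lambda>x. (cmod (u x))\<^sup>2)"
    by (simp add: field_simps)
qed

lemma parseval:
  assumes "u \<in> L2T"
  shows "integral\<^sup>L mu (\<lambda>x. (cmod (u x))\<^sup>2) = 2*pi*infsum (\<lambda>j. (cmod (fcoeff u j))\<^sup>2) UNIV"
proof -
  obtain f where f: "f \<in> L2T" "\<forall>j. fcoeff f j = fcoeff u j"
    "integral\<^sup>L mu (\<lambda>x. (cmod (f x))\<^sup>2) = 2*pi*infsum (\<lambda>j. (cmod (fcoeff u j))\<^sup>2) UNIV"
    using riesz_fischer[OF bessel_summable(1)[OF assms]] by blast
  have "AE x in mu. u x = f x"
    by (rule L1_eq_coeffs[OF L2_integrable[OF assms] L2_integrable[OF f(1)]]) (use f(2) in simp)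
  then have "integral\<^sup>L mu (\<lambda>x. (cmod (u x))\<^sup>2) = integral\<^sup>L mu (\<lambda>x. (cmod (f x))\<^sup>2)"
    by (intro integral_cong_AE) (use assms f(1) L2_meas meas_sq in \<open>auto elim!: eventually_mono\<close>)
  then show ?thesis using f(3) by simp
qed

lemma summable_on_real_comparison:
  fixes f g :: "'a \<Rightarrow> real"
  assumes "g summable_on A" "\<And>x. x \<in> A \<Longrightarrow> 0 \<le> f x" "\<And>x. x \<in> A \<Longrightarrow> f x \<le> g x"
  shows "f summable_on A"
proof -
  have "(\<lambda>x. norm (f x)) summable_on A"
    using Infinite_Sum.abs_summable_on_comparison_test'[OF assms(1), of f] assms(2,3) by auto
  then show ?thesis using assms(2) by (simp cong: summable_on_cong)
qed

lemma HsT_L2: "u \<in> HsT s \<Longrightarrow> u \<in> L2T" by (simp add: HsT_def)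

lemma HsT_summ: "u \<in> HsT s \<Longrightarrow> (\<lambda>j. (cmod (fcoeff u j))\<^sup>2 * (max 1 \<bar>real_of_int j\<bar>) ^ (2 * s)) summable_on UNIV"
  by (simp add: HsT_def)

lemma pow_le_max: "\<bar>real_of_int m\<bar> ^ (2*j) \<le> (max 1 \<bar>real_of_int m\<bar>) ^ (2*k)" if "j \<le> k" for m :: int
proof -
  have "\<bar>real_of_int m\<bar> ^ (2*j) \<le> (max 1 \<bar>real_of_int m\<bar>) ^ (2*j)" by (rule power_mono) auto
  also have "\<dots> \<le> (max 1 \<bar>real_of_int m\<bar>) ^ (2*k)" by (rule power_increasing) (use that in auto)
  finally show ?thesis .
qed

lemma derivT_ex:
  assumes "u \<in> HsT k" "j \<le> k"
  shows "\<exists>v. v \<in> L2T \<and> (\<forall>m. fcoeff v m = (\<i> * of_int m) ^ j * fcoeff u m)"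
proof -
  let ?b = "\<lambda>m::int. (\<i> * of_int m) ^ j * fcoeff u m"
  have "(\<lambda>m. (cmod (?b m))\<^sup>2) summable_on UNIV"
  proof (rule summable_on_real_comparison[OF HsT_summ[OF assms(1)]])
    fix m :: int
    show "0 \<le> (cmod (?b m))\<^sup>2" by simp
    have "(cmod (?b m))\<^sup>2 = \<bar>real_of_int m\<bar> ^ (2*j) * (cmod (fcoeff u m))\<^sup>2"
      by (simp add: norm_mult norm_power power_mult_distrib power_mult[symmetric] mult.commute)
    also have "\<dots> \<le> (max 1 \<bar>real_of_int m\<bar>) ^ (2*k) * (cmod (fcoeff u m))\<^sup>2"
      by (rule mult_right_mono[OF pow_le_max[OF assms(2)]]) simp
    finally show "(cmod (?b m))\<^sup>2 \<le> (cmod (fcoeff u m))\<^sup>2 * (max 1 \<bar>real_of_int m\<bar>) ^ (2 * k)"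
      by (simp add: mult.commute)
  qed
  from riesz_fischer[OF this] show ?thesis by blast
qed

lemma derivT_props:
  assumes "u \<in> HsT k" "j \<le> k"
  shows "derivT j u \<in> L2T" "fcoeff (derivT j u) m = (\<i> * of_int m) ^ j * fcoeff u m"
proof -
  have "derivT j u \<in> L2T \<and> (\<forall>m. fcoeff (derivT j u) m = (\<i> * of_int m) ^ j * fcoeff u m)"
    unfolding derivT_def by (rule someI_ex[OF derivT_ex[OF assms]])
  then show "derivT j u \<in> L2T" "fcoeff (derivT j u) m = (\<i> * of_int m) ^ j * fcoeff u m" by auto
qed

lemma trig_HsT:
  assumes "finite F"
  shows "(\<lambda>\<theta>. \<Sum>n\<in>F. b n * ebasis n \<theta>) \<in> HsT s"
proof -
  have "(\<lambda>j. (cmod (fcoeff (\<lambda>\<theta>. \<Sum>n\<in>F. b n * ebasis n \<theta>) j))\<^sup>2 * (max 1 \<bar>real_of_int j\<bar>) ^ (2 * s)) summable_on UNIV"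
  proof (rule finite_nonzero_values_imp_summable_on)
    show "finite {j \<in> UNIV. (cmod (fcoeff (\<lambda>\<theta>. \<Sum>n\<in>F. b n * ebasis n \<theta>) j))\<^sup>2 * (max 1 \<bar>real_of_int j\<bar>) ^ (2 * s) \<noteq> 0}"
      by (rule finite_subset[OF _ assms]) (auto simp: fcoeff_trig[OF assms] split: if_splits)
  qed
  then show ?thesis using L2_trig[OF assms] by (simp add: HsT_def)
qed

definition Wn :: "nat \<Rightarrow> int set" where "Wn N = {- Nminus N .. Nplus N}"

lemma Wn_finite[simp]: "finite (Wn N)" by (simp add: Wn_def)

lemma projN_eq: "projN N u = (\<lambda>\<theta>. \<Sum>j\<in>Wn N. fcoeff u j * ebasis j \<theta>)"
  by (simp add: projN_def Wn_def fun_eq_iff)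

lemma ranP_eq: "ranP N = {u. \<exists>b. u = (\<lambda>\<theta>. \<Sum>j\<in>Wn N. b j * ebasis j \<theta>)}"
  by (simp add: ranP_def Wn_def)

lemma fcoeff_projN: "fcoeff (projN N g) m = (if m \<in> Wn N then fcoeff g m else 0)"
  unfolding projN_eq by (rule fcoeff_trig) simp

lemma projN_L2: "projN N g \<in> L2T" unfolding projN_eq by (rule L2_trig) simp

lemma projN_trig: "projN N (\<lambda>\<theta>. \<Sum>j\<in>Wn N. b j * ebasis j \<theta>) = (\<lambda>\<theta>. \<Sum>j\<in>Wn N. b j * ebasis j \<theta>)"
  unfolding projN_eq by (simp add: fcoeff_trig cong: sum.cong)

definition Pm :: "nat \<Rightarrow> nat \<Rightarrow> (nat \<Rightarrow> complex) \<Rightarrow> int \<Rightarrow> complex" where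
  "Pm q k c m = (\<Sum>j\<in>{q..k}. c j * (\<i> * of_int m) ^ j)"

lemma L0_props:
  assumes "u \<in> HsT k"
  shows "L0op q k c u \<in> L2T" "fcoeff (L0op q k c u) m = Pm q k c m * fcoeff u m"
proof -
  have d: "j \<in> {q..k} \<Longrightarrow> derivT j u \<in> L2T" for j using derivT_props(1)[OF assms] by simp
  show "L0op q k c u \<in> L2T" unfolding L0op_def
    by (intro L2_sum L2_cmult d) auto
  have "fcoeff (L0op q k c u) m = (\<Sum>j\<in>{q..k}. fcoeff (\<lambda>\<theta>. c j * derivT j u \<theta>) m)"
    unfolding L0op_def by (rule fcoeff_sum) (use d in \<open>auto intro!: L2_integrable L2_cmult\<close>)
  also have "\<dots> = (\<Sum>j\<in>{q..k}. c j * ((\<i> * of_int m) ^ j * fcoeff u m))"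
    by (intro sum.cong refl) (simp add: fcoeff_cmult derivT_props(2)[OF assms])
  also have "\<dots> = Pm q k c m * fcoeff u m"
    by (simp add: Pm_def sum_distrib_left mult_ac)
  finally show "fcoeff (L0op q k c u) m = Pm q k c m * fcoeff u m" .
qed

definition A1 :: "nat \<Rightarrow> (nat \<Rightarrow> real \<Rightarrow> complex) \<Rightarrow> int \<Rightarrow> int \<Rightarrow> complex" where
  "A1 p a m n = (\<Sum>j\<in>{0..p}. (\<i> * of_int n) ^ j * fcoeff (\<lambda>\<theta>. a j \<theta> * ebasis n \<theta>) m)"

lemma derivT_trig_AE:
  assumes "finite F"
  shows "AE \<theta> in mu. derivT j (\<lambda>\<theta>. \<Sum>n\<in>F. b n * ebasis n \<theta>) \<theta> = (\<Sum>n\<in>F. b n * (\<i> * of_int n) ^ j * ebasis n \<theta>)"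
proof -
  let ?w = "\<lambda>\<theta>. \<Sum>n\<in>F. b n * ebasis n \<theta>"
  have w: "?w \<in> HsT j" by (rule trig_HsT[OF assms])
  show ?thesis
  proof (rule L1_eq_coeffs)
    show "integrable mu (derivT j ?w)" by (rule L2_integrable[OF derivT_props(1)[OF w order_refl]])
    show "integrable mu (\<lambda>\<theta>. \<Sum>n\<in>F. b n * (\<i> * of_int n) ^ j * ebasis n \<theta>)"
      by (rule L2_integrable[OF L2_trig[OF assms]])
    show "\<forall>m. fcoeff (derivT j ?w) m = fcoeff (\<lambda>\<theta>. \<Sum>n\<in>F. b n * (\<i> * of_int n) ^ j * ebasis n \<theta>) m"
      using derivT_props(2)[OF w order_refl] fcoeff_trig[OF assms, of b] fcoeff_trig[OF assms, of "\<lambda>n. b n * (\<i> * of_int n) ^ j"]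
      by (simp add: mult_ac)
  qed
qed

lemma L1_coeff:
  assumes a: "\<forall>j\<le>p. a j \<in> L2T" and F: "finite F"
  shows "fcoeff (L1op p a (\<lambda>\<theta>. \<Sum>n\<in>F. b n * ebasis n \<theta>)) m = (\<Sum>n\<in>F. b n * A1 p a m n)"
proof -
  let ?w = "\<lambda>\<theta>. \<Sum>n\<in>F. b n * ebasis n \<theta>"
  have w: "?w \<in> HsT j" for j by (rule trig_HsT[OF F])
  have am: "a j \<in> borel_measurable mu" if "j \<in> {0..p}" for j using a that L2_meas by auto
  let ?g = "\<lambda>\<theta>. \<Sum>j\<in>{0..p}. \<Sum>n\<in>F. (b n * (\<i> * of_int n) ^ j) * (a j \<theta> * ebasis n \<theta>)"
  have m1: "L1op p a ?w \<in> borel_measurable mu"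
    unfolding L1op_def
    by (intro borel_measurable_sum borel_measurable_times am L2_meas[OF derivT_props(1)[OF w order_refl]])
  have aeL: "integrable mu (\<lambda>\<theta>. a j \<theta> * ebasis n \<theta>)" if "j \<in> {0..p}" for j n
    using a that by (auto intro: int_mult_ebasis L2_integrable)
  have m2: "?g \<in> borel_measurable mu"
    by (intro borel_measurable_sum borel_measurable_times borel_measurable_const am ebasis_meas) auto
  have ae: "AE \<theta> in mu. L1op p a ?w \<theta> = ?g \<theta>"
  proof -
    have "AE \<theta> in mu. \<forall>j\<in>{0..p}. derivT j ?w \<theta> = (\<Sum>n\<in>F. b n * (\<i> * of_int n) ^ j * ebasis n \<theta>)"
      by (subst AE_finite_all) (auto intro: derivT_trig_AE[OF F])
    then show ?thesis
    proof eventually_elim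
      case (elim \<theta>)
      then show ?case unfolding L1op_def
        by (auto intro!: sum.cong simp: sum_distrib_left mult_ac)
    qed
  qed
  have "fcoeff (L1op p a ?w) m = fcoeff ?g m" by (rule fcoeff_cong[OF m1 m2 ae])
  also have "\<dots> = (\<Sum>j\<in>{0..p}. fcoeff (\<lambda>\<theta>. \<Sum>n\<in>F. (b n * (\<i> * of_int n) ^ j) * (a j \<theta> * ebasis n \<theta>)) m)"
    by (rule fcoeff_sum) (auto intro!: Bochner_Integration.integrable_sum aeL)
  also have "\<dots> = (\<Sum>j\<in>{0..p}. \<Sum>n\<in>F. (b n * (\<i> * of_int n) ^ j) * fcoeff (\<lambda>\<theta>. a j \<theta> * ebasis n \<theta>) m)"
  proof (rule sum.cong[OF refl])
    fix j assume j: "j \<in> {0..p}"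
    show "fcoeff (\<lambda>\<theta>. \<Sum>n\<in>F. (b n * (\<i> * of_int n) ^ j) * (a j \<theta> * ebasis n \<theta>)) m =
          (\<Sum>n\<in>F. (b n * (\<i> * of_int n) ^ j) * fcoeff (\<lambda>\<theta>. a j \<theta> * ebasis n \<theta>) m)"
      by (subst fcoeff_sum[OF F]) (auto intro: aeL[OF j] simp: fcoeff_cmult)
  qed
  also have "\<dots> = (\<Sum>n\<in>F. b n * A1 p a m n)"
    unfolding A1_def by (subst sum.swap) (simp add: sum_distrib_left mult_ac)
  finally show ?thesis .
qed

lemma fin_inj_inverse:
  fixes B :: "nat \<Rightarrow> nat \<Rightarrow> complex" and n :: nat
  assumes inj: "\<And>x. (\<forall>i<n. (\<Sum>l<n. B i l * x l) = 0) \<Longrightarrow> \<forall>l<n. x l = 0"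
  shows "\<exists>C. (\<forall>i<n. \<forall>l<n. (\<Sum>j<n. B i j * C j l) = (if i = l then 1 else 0)) \<and>
             (\<forall>i<n. \<forall>l<n. (\<Sum>j<n. C i j * B j l) = (if i = l then 1 else 0))"
proof -
  define A where "A = mat n n (\<lambda>(i,j). B i j)"
  have A: "A \<in> carrier_mat n n" unfolding A_def by simp
  have dA: "det A \<noteq> 0"
  proof
    assume "det A = 0"
    then obtain v where v: "v \<in> carrier_vec n" "v \<noteq> 0\<^sub>v n" "A *\<^sub>v v = 0\<^sub>v n"
      using det_0_iff_vec_prod_zero[OF A] by blast
    have "\<forall>i<n. (\<Sum>l<n. B i l * vec_index v l) = 0"
    proof (intro allI impI)
      fix i assume i: "i < n"
      have "vec_index (A *\<^sub>v v) i = 0" using v(3) i by simp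
      moreover have "vec_index (A *\<^sub>v v) i = (\<Sum>l<n. B i l * vec_index v l)"
        using i v(1) unfolding A_def by (simp add: scalar_prod_def lessThan_atLeast0)
      ultimately show "(\<Sum>l<n. B i l * vec_index v l) = 0" by simp
    qed
    then have "\<forall>l<n. vec_index v l = 0" by (rule inj)
    then have "v = 0\<^sub>v n" using v(1) by (intro eq_vecI) auto
    with v(2) show False by simp
  qed
  define C where "C i j = vec_index (row (adj_mat A) i) j / det A" for i j
  have adjC: "adj_mat A \<in> carrier_mat n n" by (rule adj_mat(1)[OF A])
  have C_eq: "C i j = adj_mat A $$ (i,j) / det A" if "i < n" "j < n" for i j
    unfolding C_def using that adjC by simp
  have r: "(\<Sum>j<n. B i j * C j l) = (if i = l then 1 else 0)" if "i < n" "l < n" for i l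
  proof -
    have "(A * adj_mat A) $$ (i,l) = (det A \<cdot>\<^sub>m 1\<^sub>m n) $$ (i,l)" using adj_mat(2)[OF A] by simp
    moreover have "(A * adj_mat A) $$ (i,l) = (\<Sum>j<n. B i j * adj_mat A $$ (j,l))"
      using that adjC unfolding A_def by (simp add: scalar_prod_def lessThan_atLeast0)
    moreover have "(det A \<cdot>\<^sub>m 1\<^sub>m n) $$ (i,l) = (if i = l then det A else 0)" using that by simp
    ultimately have "(\<Sum>j<n. B i j * adj_mat A $$ (j,l)) = (if i = l then det A else 0)" by simp
    then have "(\<Sum>j<n. B i j * adj_mat A $$ (j,l)) / det A = (if i = l then 1 else 0)" using dA by simp
    then show ?thesis using that by (simp add: C_eq sum_divide_distrib)
  qed
  have l: "(\<Sum>j<n. C i j * B j l) = (if i = l then 1 else 0)" if "i < n" "l < n" for i l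
  proof -
    have "(adj_mat A * A) $$ (i,l) = (det A \<cdot>\<^sub>m 1\<^sub>m n) $$ (i,l)" using adj_mat(3)[OF A] by simp
    moreover have "(adj_mat A * A) $$ (i,l) = (\<Sum>j<n. adj_mat A $$ (i,j) * B j l)"
      using that adjC unfolding A_def by (simp add: scalar_prod_def lessThan_atLeast0)
    moreover have "(det A \<cdot>\<^sub>m 1\<^sub>m n) $$ (i,l) = (if i = l then det A else 0)" using that by simp
    ultimately have "(\<Sum>j<n. adj_mat A $$ (i,j) * B j l) = (if i = l then det A else 0)" by simp
    then have "(\<Sum>j<n. adj_mat A $$ (i,j) * B j l) / det A = (if i = l then 1 else 0)" using dA by simp
    then show ?thesis using that by (simp add: C_eq sum_divide_distrib)
  qed
  show ?thesis using r l by blast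
qed

lemma fin_inj_inverse_set:
  fixes B :: "'a \<Rightarrow> 'a \<Rightarrow> complex"
  assumes W: "finite W"
    and inj: "\<And>x. (\<forall>m\<in>W. (\<Sum>w\<in>W. B m w * x w) = 0) \<Longrightarrow> \<forall>w\<in>W. x w = 0"
  shows "\<exists>C. (\<forall>m\<in>W. \<forall>l\<in>W. (\<Sum>w\<in>W. B m w * C w l) = (if m = l then 1 else 0)) \<and>
             (\<forall>m\<in>W. \<forall>l\<in>W. (\<Sum>w\<in>W. C m w * B w l) = (if m = l then 1 else 0))"
proof -
  define n where "n = card W"
  obtain h where h: "bij_betw h {0..<n} W" using ex_bij_betw_nat_finite[OF W] unfolding n_def by blast
  define g where "g = inv_into {0..<n} h"
  have hg: "w \<in> W \<Longrightarrow> h (g w) = w" for w unfolding g_def using h by (simp add: bij_betw_inv_into_right)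
  have gW: "w \<in> W \<Longrightarrow> g w < n" for w unfolding g_def using h
    by (metis atLeastLessThan_iff bij_betw_def inv_into_into)
  have gh: "i < n \<Longrightarrow> g (h i) = i" for i unfolding g_def using h
    by (simp add: bij_betw_inv_into_left)
  have hW: "i < n \<Longrightarrow> h i \<in> W" for i using h by (auto simp: bij_betw_def)
  have hinj: "i < n \<Longrightarrow> j < n \<Longrightarrow> h i = h j \<longleftrightarrow> i = j" for i j using gh by metis
  have reidx: "(\<Sum>l<n. F (h l)) = (\<Sum>w\<in>W. F w)" for F :: "'a \<Rightarrow> complex"
    using sum.reindex_bij_betw[OF h, of F] by (simp add: lessThan_atLeast0)
  define B' where "B' i l = B (h i) (h l)" for i l
  have inj': "\<forall>l<n. x l = 0" if hx: "\<forall>i<n. (\<Sum>l<n. B' i l * x l) = 0" for x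
  proof -
    define b where "b w = x (g w)" for w
    have "\<forall>m\<in>W. (\<Sum>w\<in>W. B m w * b w) = 0"
    proof
      fix m assume m: "m \<in> W"
      have "(\<Sum>w\<in>W. B m w * b w) = (\<Sum>l<n. B m (h l) * b (h l))" by (rule reidx[symmetric])
      also have "\<dots> = (\<Sum>l<n. B' (g m) l * x l)"
        by (intro sum.cong refl) (simp add: B'_def b_def hg[OF m] gh)
      also have "\<dots> = 0" using hx gW[OF m] by blast
      finally show "(\<Sum>w\<in>W. B m w * b w) = 0" .
    qed
    then have "\<forall>w\<in>W. b w = 0" by (rule inj)
    then show ?thesis using hW gh unfolding b_def by metis
  qed
  obtain C' where C': "\<forall>i<n. \<forall>l<n. (\<Sum>j<n. B' i j * C' j l) = (if i = l then 1 else 0)"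
    "\<forall>i<n. \<forall>l<n. (\<Sum>j<n. C' i j * B' j l) = (if i = l then 1 else 0)"
    using fin_inj_inverse[of n B'] inj' by blast
  define C where "C m w = C' (g m) (g w)" for m w
  have r: "(\<Sum>w\<in>W. B m w * C w l) = (if m = l then 1 else 0)" if "m \<in> W" "l \<in> W" for m l
  proof -
    have "(\<Sum>w\<in>W. B m w * C w l) = (\<Sum>t<n. B m (h t) * C (h t) l)" by (rule reidx[symmetric])
    also have "\<dots> = (\<Sum>t<n. B' (g m) t * C' t (g l))"
      by (intro sum.cong refl) (simp add: B'_def C_def hg[OF that(1)] gh)
    also have "\<dots> = (if g m = g l then 1 else 0)" using C'(1) gW that by blast
    also have "\<dots> = (if m = l then 1 else 0)" using hg that by metis
    finally show ?thesis .
  qed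
  have l: "(\<Sum>w\<in>W. C m w * B w l) = (if m = l then 1 else 0)" if "m \<in> W" "l \<in> W" for m l
  proof -
    have "(\<Sum>w\<in>W. C m w * B w l) = (\<Sum>t<n. C m (h t) * B (h t) l)" by (rule reidx[symmetric])
    also have "\<dots> = (\<Sum>t<n. C' (g m) t * B' t (g l))"
      by (intro sum.cong refl) (simp add: B'_def C_def hg[OF that(2)] gh)
    also have "\<dots> = (if g m = g l then 1 else 0)" using C'(2) gW that by blast
    also have "\<dots> = (if m = l then 1 else 0)" using hg that by metis
    finally show ?thesis .
  qed
  show ?thesis using r l by blast
qed

lemma Pm_lower:
  assumes "q \<le> k" "k \<ge> 1" and x1: "1 \<le> \<bar>real_of_int m\<bar>"
  shows "\<bar>real_of_int m\<bar> ^ (k-1) * (cmod (c k) * \<bar>real_of_int m\<bar> - (\<Sum>j\<in>{q..<k}. cmod (c j))) \<le> cmod (Pm q k c m)"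
proof -
  define x where "x = \<bar>real_of_int m\<bar>"
  define S where "S = (\<Sum>j\<in>{q..<k}. c j * (\<i> * of_int m) ^ j)"
  have x0: "1 \<le> x" using x1 unfolding x_def .
  have nm: "cmod (\<i> * complex_of_int m) = x" unfolding x_def by (simp add: norm_mult)
  have split: "{q..k} = insert k {q..<k}" using assms(1) by auto
  have P: "Pm q k c m = c k * (\<i> * of_int m) ^ k + S"
    unfolding Pm_def S_def split by simp
  have "cmod S \<le> (\<Sum>j\<in>{q..<k}. cmod (c j * (\<i> * of_int m) ^ j))" unfolding S_def by (rule norm_sum)
  also have "\<dots> = (\<Sum>j\<in>{q..<k}. cmod (c j) * x ^ j)" by (simp add: norm_mult norm_power nm x_def)
  also have "\<dots> \<le> (\<Sum>j\<in>{q..<k}. cmod (c j) * x ^ (k-1))"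
    by (intro sum_mono mult_left_mono power_increasing) (use x0 in auto)
  also have "\<dots> = (\<Sum>j\<in>{q..<k}. cmod (c j)) * x ^ (k-1)" by (simp add: sum_distrib_right)
  finally have Sb: "cmod S \<le> (\<Sum>j\<in>{q..<k}. cmod (c j)) * x ^ (k-1)" .
  have xk: "x ^ k = x ^ (k-1) * x" using assms(2) by (cases k) (simp_all add: power_Suc2)
  have "cmod (c k * (\<i> * of_int m) ^ k) - cmod S \<le> cmod (Pm q k c m)"
    unfolding P using norm_diff_ineq[of "c k * (\<i> * of_int m) ^ k" S] by simp
  moreover have "cmod (c k * (\<i> * of_int m) ^ k) = cmod (c k) * (x ^ (k-1) * x)"
  proof -
    have "cmod (c k * (\<i> * of_int m) ^ k) = cmod (c k) * x ^ k" by (simp add: norm_mult norm_power x_def)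
    then show ?thesis by (simp only: xk)
  qed
  ultimately have "cmod (c k) * (x ^ (k-1) * x) - (\<Sum>j\<in>{q..<k}. cmod (c j)) * x ^ (k-1) \<le> cmod (Pm q k c m)"
    using Sb by linarith
  then show ?thesis unfolding x_def[symmetric] by (simp add: algebra_simps)
qed

lemma notin_Wn: "m \<notin> Wn N \<Longrightarrow> int N \<le> 2 * \<bar>m\<bar>"
  unfolding Wn_def Nminus_def Nplus_def by (simp add: not_le) presburger

lemma Pm_gap:
  assumes ck: "c k \<noteq> 0" and "q \<le> k" "k \<ge> 1" "c0 > 0"
  shows "\<exists>N0. \<forall>N\<ge>N0. \<forall>m. m \<notin> Wn N \<longrightarrow> c0 * real N ^ (k-1) + 1 \<le> cmod (Pm q k c m)"
proof -
  define K where "K = cmod (c k)"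
  define R where "R = (\<Sum>j\<in>{q..<k}. cmod (c j))"
  have K: "K > 0" using ck unfolding K_def by simp
  have R: "R \<ge> 0" unfolding R_def by (simp add: sum_nonneg)
  define y where "y = 2 * (2^(k-1) * (c0+1) + R) / K"
  define N0 where "N0 = nat \<lceil>y\<rceil> + 2"
  have y0: "y \<ge> 0" unfolding y_def using K R assms(4) by simp
  show ?thesis
  proof (intro exI allI impI)
    fix N m assume N: "N0 \<le> N" and m: "m \<notin> Wn N"
    define x where "x = \<bar>real_of_int m\<bar>"
    have Ny: "y \<le> real N" using N y0 unfolding N0_def by linarith
    have N2: "2 \<le> real N" using N unfolding N0_def by simp
    have xN: "real N / 2 \<le> x" using notin_Wn[OF m] unfolding x_def by linarith
    have x1: "1 \<le> x" using xN N2 by simp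
    have low: "x ^ (k-1) * (K * x - R) \<le> cmod (Pm q k c m)"
      using Pm_lower[OF assms(2,3), of m c] x1 unfolding x_def K_def R_def by simp
    have "K * y = 2 * (2^(k-1) * (c0+1) + R)" unfolding y_def using K by simp
    moreover have "K * y \<le> K * real N" using Ny K by simp
    ultimately have "2^(k-1) * (c0+1) + R \<le> K * (real N / 2)" by simp
    also have "\<dots> \<le> K * x" using xN K by simp
    finally have Kx: "2^(k-1) * (c0+1) \<le> K * x - R" by simp
    have p: "(real N / 2) ^ (k-1) \<le> x ^ (k-1)" by (rule power_mono[OF xN]) (use N2 in simp)
    have "(real N / 2) ^ (k-1) * (2^(k-1) * (c0+1)) \<le> x ^ (k-1) * (K * x - R)"
      by (rule mult_mono[OF p Kx]) (use assms(4) x1 in simp_all)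
    moreover have "(real N / 2) ^ (k-1) * (2^(k-1) * (c0+1)) = real N ^ (k-1) * (c0 + 1)"
      by (simp add: power_divide)
    moreover have "1 \<le> real N ^ (k-1)" using N2 by simp
    ultimately show "c0 * real N ^ (k-1) + 1 \<le> cmod (Pm q k c m)" using low by (simp add: algebra_simps)
  qed
qed

lemma Pm_growth:
  assumes ck: "c k \<noteq> 0" and "q \<le> k" "k \<ge> 1"
  shows "\<exists>R0 \<beta>. \<beta> > 0 \<and> (\<forall>m. R0 \<le> \<bar>real_of_int m\<bar> \<longrightarrow> \<beta> * \<bar>real_of_int m\<bar> ^ k \<le> cmod (Pm q k c m - z))"
proof -
  define K where "K = cmod (c k)"
  define R where "R = (\<Sum>j\<in>{q..<k}. cmod (c j))"
  have K: "K > 0" using ck unfolding K_def by simp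
  have R: "R \<ge> 0" unfolding R_def by (simp add: sum_nonneg)
  define R0 where "R0 = max 1 (2 * (cmod z + R) / K)"
  show ?thesis
  proof (intro exI conjI allI impI)
    show "K / 2 > 0" using K by simp
    fix m assume m: "R0 \<le> \<bar>real_of_int m\<bar>"
    define x where "x = \<bar>real_of_int m\<bar>"
    have x1: "1 \<le> x" using m unfolding x_def R0_def by simp
    have "2 * (cmod z + R) / K \<le> x" using m unfolding x_def R0_def by simp
    then have "2 * (cmod z + R) \<le> K * x" using K by (simp add: divide_le_eq mult.commute)
    then have zx: "cmod z \<le> K * x / 2 - R" by simp
    have low: "x ^ (k-1) * (K * x - R) \<le> cmod (Pm q k c m)"
      using Pm_lower[OF assms(2,3), of m c] x1 unfolding x_def K_def R_def by simp
    have xk: "x ^ k = x ^ (k-1) * x" using assms(3) by (cases k) (simp_all add: power_Suc2)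
    have p1: "1 \<le> x ^ (k-1)" using x1 by simp
    have "cmod z \<le> x ^ (k-1) * (K * x / 2 - R)"
    proof -
      have "0 \<le> K * x / 2 - R" using zx norm_ge_zero order_trans by blast
      then have "1 * (K * x / 2 - R) \<le> x ^ (k-1) * (K * x / 2 - R)" by (rule mult_right_mono[OF p1])
      then show ?thesis using zx by simp
    qed
    then have "K / 2 * x ^ k \<le> x ^ (k-1) * (K * x - R) - cmod z"
      unfolding xk by (simp add: algebra_simps)
    also have "\<dots> \<le> cmod (Pm q k c m) - cmod z" using low by simp
    also have "\<dots> \<le> cmod (Pm q k c m - z)" by (rule norm_triangle_ineq2)
    finally show "K / 2 * \<bar>real_of_int m\<bar> ^ k \<le> cmod (Pm q k c m - z)" unfolding x_def .
  qed
qed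

lemma LN_coeff:
  assumes aL2: "\<forall>j\<le>p. a j \<in> L2T" and u: "u \<in> HsT k"
  shows "(\<lambda>\<theta>. L0op q k c u \<theta> + projN N (L1op p a (projN N u)) \<theta> - z * u \<theta>) \<in> L2T"
    "fcoeff (\<lambda>\<theta>. L0op q k c u \<theta> + projN N (L1op p a (projN N u)) \<theta> - z * u \<theta>) m =
       (Pm q k c m - z) * fcoeff u m + (if m \<in> Wn N then (\<Sum>n\<in>Wn N. fcoeff u n * A1 p a m n) else 0)"
proof -
  have uL2: "u \<in> L2T" by (rule HsT_L2[OF u])
  have L0: "L0op q k c u \<in> L2T" by (rule L0_props(1)[OF u])
  have P: "projN N (L1op p a (projN N u)) \<in> L2T" by (rule projN_L2)
  have zu: "(\<lambda>\<theta>. z * u \<theta>) \<in> L2T" by (rule L2_cmult[OF uL2])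
  have sum: "(\<lambda>\<theta>. L0op q k c u \<theta> + projN N (L1op p a (projN N u)) \<theta>) \<in> L2T" by (rule L2_add[OF L0 P])
  show "(\<lambda>\<theta>. L0op q k c u \<theta> + projN N (L1op p a (projN N u)) \<theta> - z * u \<theta>) \<in> L2T"
    by (rule L2_diff[OF sum zu])
  have pu: "projN N u = (\<lambda>\<theta>. \<Sum>n\<in>Wn N. fcoeff u n * ebasis n \<theta>)" by (rule projN_eq)
  have c1: "fcoeff (projN N (L1op p a (projN N u))) m =
      (if m \<in> Wn N then (\<Sum>n\<in>Wn N. fcoeff u n * A1 p a m n) else 0)"
    unfolding fcoeff_projN pu using L1_coeff[OF aL2 Wn_finite[of N], of "fcoeff u" m] by simp
  have "fcoeff (\<lambda>\<theta>. L0op q k c u \<theta> + projN N (L1op p a (projN N u)) \<theta> - z * u \<theta>) m =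
        fcoeff (\<lambda>\<theta>. L0op q k c u \<theta> + projN N (L1op p a (projN N u)) \<theta>) m - fcoeff (\<lambda>\<theta>. z * u \<theta>) m"
    by (rule fcoeff_diff[OF L2_integrable[OF sum] L2_integrable[OF zu]])
  also have "\<dots> = fcoeff (L0op q k c u) m + fcoeff (projN N (L1op p a (projN N u))) m - z * fcoeff u m"
    using fcoeff_add[OF L2_integrable[OF L0] L2_integrable[OF P]] by (simp add: fcoeff_cmult)
  also have "\<dots> = (Pm q k c m - z) * fcoeff u m + (if m \<in> Wn N then (\<Sum>n\<in>Wn N. fcoeff u n * A1 p a m n) else 0)"
    by (simp add: L0_props(2)[OF u] c1 algebra_simps)
  finally show "fcoeff (\<lambda>\<theta>. L0op q k c u \<theta> + projN N (L1op p a (projN N u)) \<theta> - z * u \<theta>) m =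
       (Pm q k c m - z) * fcoeff u m + (if m \<in> Wn N then (\<Sum>n\<in>Wn N. fcoeff u n * A1 p a m n) else 0)" .
qed

lemma fcoeff_zero: "fcoeff (\<lambda>_. 0) m = 0" by (simp add: fcoeff_mu)

lemma aeqT_zero_fcoeff:
  assumes "g \<in> borel_measurable mu" "aeqT g (\<lambda>_. 0)"
  shows "fcoeff g m = 0"
proof -
  have "fcoeff g m = fcoeff (\<lambda>_. 0) m"
    by (rule fcoeff_cong[OF assms(1)]) (use assms(2) in \<open>simp_all add: aeqT_mu\<close>)
  then show ?thesis by (simp add: fcoeff_zero)
qed

lemma ranP_props:
  assumes "u \<in> ranP N"
  obtains b where "u = (\<lambda>\<theta>. \<Sum>j\<in>Wn N. b j * ebasis j \<theta>)" "u \<in> HsT k" "projN N u = u"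
proof -
  obtain b where b: "u = (\<lambda>\<theta>. \<Sum>j\<in>Wn N. b j * ebasis j \<theta>)" using assms unfolding ranP_eq by blast
  have "u \<in> HsT k" unfolding b by (rule trig_HsT) simp
  moreover have "projN N u = u" unfolding b by (rule projN_trig)
  ultimately show ?thesis using b that by blast
qed

lemma eig_sub_spec:
  assumes L_def: "L = (\<lambda>u \<theta>. L0op q k c u \<theta> + projN N (L1op p a (projN N u)) \<theta>)"
    and M_def: "M = (\<lambda>u \<theta>. L0op q k c u \<theta> + projN N (L1op p a u) \<theta>)"
    and z: "z \<in> eigs_on M (ranP N)"
  shows "z \<in> spectrumL2 L (HsT k)"
proof -
  obtain u where u: "u \<in> ranP N" "\<not> aeqT u (\<lambda>_. 0)" "aeqT (M u) (\<lambda>\<theta>. z * u \<theta>)"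
    using z unfolding eigs_on_def by blast
  obtain b where ub: "u \<in> HsT k" "projN N u = u" using ranP_props[OF u(1)] by metis
  have LM: "L u = M u" unfolding L_def M_def using ub(2) by simp
  have "aeqT (\<lambda>\<theta>. L u \<theta> - z * u \<theta>) (\<lambda>_. 0)"
    using u(3) unfolding LM aeqT_mu by eventually_elim simp
  then show ?thesis unfolding spectrumL2_def using ub(1) u(2) by blast
qed


lemma finite_small_ints: "finite {m::int. \<bar>real_of_int m\<bar> < T}"
proof (rule finite_subset[of _ "{-\<lceil>T\<rceil>..\<lceil>T\<rceil>}"])
  show "{m::int. \<bar>real_of_int m\<bar> < T} \<subseteq> {-\<lceil>T\<rceil>..\<lceil>T\<rceil>}"
  proof
    fix m :: int assume "m \<in> {m. \<bar>real_of_int m\<bar> < T}"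
    then have "\<bar>real_of_int m\<bar> < T" by simp
    then have "real_of_int m \<le> T" "- T \<le> real_of_int m" by linarith+
    then have "m \<le> \<lceil>T\<rceil>" "-\<lceil>T\<rceil> \<le> m" by linarith+
    then show "m \<in> {-\<lceil>T\<rceil>..\<lceil>T\<rceil>}" by simp
  qed
qed simp

lemma sum_delta_mult:
  fixes f :: "int \<Rightarrow> complex"
  assumes "finite W" "m \<in> W"
  shows "(\<Sum>n\<in>W. (if m = n then 1 else 0) * f n) = f m"
proof -
  have "(\<Sum>n\<in>W. (if m = n then 1 else 0) * f n) = (\<Sum>n\<in>W. if n = m then f m else 0)"
    by (intro sum.cong refl) auto
  also have "\<dots> = f m" using assms by (simp add: sum.delta)
  finally show ?thesis .
qed

lemma resolvent:
  assumes L_def: "L = (\<lambda>u \<theta>. L0op q k c u \<theta> + projN N (L1op p a (projN N u)) \<theta>)"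
    and M_def: "M = (\<lambda>u \<theta>. L0op q k c u \<theta> + projN N (L1op p a u) \<theta>)"
    and aL2: "\<forall>j\<le>p. a j \<in> L2T" and ck: "c k \<noteq> 0" "q \<le> k" "k \<ge> 1"
    and gap: "\<And>m. m \<notin> Wn N \<Longrightarrow> 1 \<le> cmod (Pm q k c m - z)"
    and noeig: "z \<notin> eigs_on M (ranP N)"
  shows "z \<notin> spectrumL2 L (HsT k)"
proof -
  define W where "W = Wn N"
  have Wf: "finite W" unfolding W_def by simp
  define G where "G u = (\<lambda>\<theta>. L u \<theta> - z * u \<theta>)" for u
  have Geq: "G u = (\<lambda>\<theta>. L0op q k c u \<theta> + projN N (L1op p a (projN N u)) \<theta> - z * u \<theta>)" for u
    unfolding G_def L_def by simp
  have GL2: "G u \<in> L2T" if "u \<in> HsT k" for u unfolding Geq by (rule LN_coeff(1)[OF aL2 that])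
  define Bm where "Bm m n = (if m = n then Pm q k c m - z else 0) + A1 p a m n" for m n
  have cW: "fcoeff (G u) m = (\<Sum>n\<in>W. Bm m n * fcoeff u n)" if "u \<in> HsT k" "m \<in> W" for u m
  proof -
    have "fcoeff (G u) m = (Pm q k c m - z) * fcoeff u m + (\<Sum>n\<in>W. fcoeff u n * A1 p a m n)"
      unfolding Geq LN_coeff(2)[OF aL2 that(1)] using that(2) by (simp add: W_def)
    also have "\<dots> = (\<Sum>n\<in>W. Bm m n * fcoeff u n)"
    proof -
      have "(\<Sum>n\<in>W. Bm m n * fcoeff u n) = (\<Sum>n\<in>W. (if m = n then Pm q k c m - z else 0) * fcoeff u n) +
             (\<Sum>n\<in>W. A1 p a m n * fcoeff u n)"
        unfolding Bm_def by (simp add: distrib_right sum.distrib)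
      also have "(\<Sum>n\<in>W. (if m = n then Pm q k c m - z else 0) * fcoeff u n) = (Pm q k c m - z) * fcoeff u m"
      proof -
        have "(\<Sum>n\<in>W. (if m = n then Pm q k c m - z else 0) * fcoeff u n) =
              (\<Sum>n\<in>W. if n = m then (Pm q k c m - z) * fcoeff u m else 0)"
          by (intro sum.cong refl) auto
        also have "\<dots> = (Pm q k c m - z) * fcoeff u m" using that(2) Wf by (simp add: sum.delta)
        finally show ?thesis .
      qed
      finally show ?thesis by (simp add: mult_ac)
    qed
    finally show ?thesis .
  qed
  have cO: "fcoeff (G u) m = (Pm q k c m - z) * fcoeff u m" if "u \<in> HsT k" "m \<notin> W" for u m
    unfolding Geq LN_coeff(2)[OF aL2 that(1)] using that(2) by (simp add: W_def)
  have Pnz: "Pm q k c m - z \<noteq> 0" if "m \<notin> W" for m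
    using gap[of m] that unfolding W_def by auto
  have injB: "\<forall>w\<in>W. b w = 0" if hb: "\<forall>m\<in>W. (\<Sum>n\<in>W. Bm m n * b n) = 0" for b
  proof -
    define ub where "ub = (\<lambda>\<theta>. \<Sum>n\<in>W. b n * ebasis n \<theta>)"
    have ubH: "ub \<in> HsT k" unfolding ub_def by (rule trig_HsT[OF Wf])
    have ubR: "ub \<in> ranP N" unfolding ranP_eq ub_def W_def by blast
    have ubP: "projN N ub = ub" unfolding ub_def W_def by (rule projN_trig)
    have ubc: "fcoeff ub n = (if n \<in> W then b n else 0)" for n unfolding ub_def by (rule fcoeff_trig[OF Wf])
    have "\<forall>m. fcoeff (G ub) m = 0"
    proof
      fix m show "fcoeff (G ub) m = 0"
      proof (cases "m \<in> W")
        case True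
        have "fcoeff (G ub) m = (\<Sum>n\<in>W. Bm m n * fcoeff ub n)" by (rule cW[OF ubH True])
        also have "\<dots> = (\<Sum>n\<in>W. Bm m n * b n)" by (intro sum.cong refl) (simp add: ubc)
        finally show ?thesis using hb True by simp
      next
        case False
        then show ?thesis using cO[OF ubH False] ubc by simp
      qed
    qed
    then have "AE x in mu. G ub x = 0" by (intro fourier_unique L2_integrable GL2 ubH)
    moreover have "L ub = M ub" unfolding L_def M_def using ubP by simp
    ultimately have "aeqT (M ub) (\<lambda>\<theta>. z * ub \<theta>)"
      unfolding aeqT_mu G_def by (auto elim!: eventually_mono)
    then have "aeqT ub (\<lambda>_. 0)" using noeig ubR unfolding eigs_on_def by blast
    then have "fcoeff ub n = 0" for n by (rule aeqT_zero_fcoeff[OF L2_meas[OF HsT_L2[OF ubH]]])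
    then show ?thesis using ubc by (metis (full_types))
  qed
  obtain Cm where CR: "\<forall>m\<in>W. \<forall>l\<in>W. (\<Sum>w\<in>W. Bm m w * Cm w l) = (if m = l then 1 else 0)"
    and CL: "\<forall>m\<in>W. \<forall>l\<in>W. (\<Sum>w\<in>W. Cm m w * Bm w l) = (if m = l then 1 else 0)"
    using fin_inj_inverse_set[OF Wf, of Bm] injB by blast
  have uW: "fcoeff u m = (\<Sum>l\<in>W. Cm m l * fcoeff (G u) l)" if "u \<in> HsT k" "m \<in> W" for u m
  proof -
    have "(\<Sum>l\<in>W. Cm m l * fcoeff (G u) l) = (\<Sum>l\<in>W. Cm m l * (\<Sum>n\<in>W. Bm l n * fcoeff u n))"
      by (intro sum.cong refl) (simp add: cW[OF that(1)])
    also have "\<dots> = (\<Sum>l\<in>W. \<Sum>n\<in>W. Cm m l * Bm l n * fcoeff u n)"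
      by (simp add: sum_distrib_left mult.assoc)
    also have "\<dots> = (\<Sum>n\<in>W. \<Sum>l\<in>W. Cm m l * Bm l n * fcoeff u n)" by (rule sum.swap)
    also have "\<dots> = (\<Sum>n\<in>W. (\<Sum>l\<in>W. Cm m l * Bm l n) * fcoeff u n)"
      by (simp add: sum_distrib_right)
    also have "\<dots> = (\<Sum>n\<in>W. (if m = n then 1 else 0) * fcoeff u n)"
      by (intro sum.cong refl) (use CL that(2) in simp)
    also have "\<dots> = fcoeff u m" by (rule sum_delta_mult[OF Wf that(2)])
    finally show ?thesis by simp
  qed
  have surj: "\<forall>f\<in>L2T. \<exists>u\<in>HsT k. aeqT (\<lambda>\<theta>. L u \<theta> - z * u \<theta>) f"
  proof
    fix f assume fL2: "f \<in> L2T"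
    define fc where "fc = fcoeff f"
    have fsum: "(\<lambda>m. (cmod (fc m))\<^sup>2) summable_on UNIV" unfolding fc_def by (rule bessel_summable(1)[OF fL2])
    define bu where "bu m = (if m \<in> W then (\<Sum>l\<in>W. Cm m l * fc l) else fc m / (Pm q k c m - z))" for m
    obtain R0 \<beta> where \<beta>: "\<beta> > 0" "\<And>m. R0 \<le> \<bar>real_of_int m\<bar> \<Longrightarrow> \<beta> * \<bar>real_of_int m\<bar> ^ k \<le> cmod (Pm q k c m - z)"
      using Pm_growth[of c k q z] ck by blast
    define T where "T = max R0 1"
    define Big where "Big = {m. m \<notin> W \<and> T \<le> \<bar>real_of_int m\<bar>}"
    have small: "finite (UNIV - Big)"
    proof (rule finite_subset[of _ "W \<union> {m. \<bar>real_of_int m\<bar> < T}"])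
      show "UNIV - Big \<subseteq> W \<union> {m. \<bar>real_of_int m\<bar> < T}" unfolding Big_def by auto
      show "finite (W \<union> {m. \<bar>real_of_int m\<bar> < T})" using Wf finite_small_ints by simp
    qed
    let ?w = "\<lambda>m::int. (cmod (bu m))\<^sup>2 * (max 1 \<bar>real_of_int m\<bar>) ^ (2 * k)"
    have wBig: "?w summable_on Big"
    proof (rule summable_on_real_comparison)
      show "(\<lambda>m. (cmod (fc m))\<^sup>2 / \<beta>\<^sup>2) summable_on Big"
        using summable_on_subset_banach[OF summable_on_cmult_left[OF fsum, of "1/\<beta>\<^sup>2"]] by simp
      fix m assume m: "m \<in> Big"
      show "0 \<le> ?w m" by simp
      have mW: "m \<notin> W" and mT: "T \<le> \<bar>real_of_int m\<bar>" using m unfolding Big_def by auto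
      define x where "x = \<bar>real_of_int m\<bar>"
      have x1: "1 \<le> x" using mT unfolding x_def T_def by simp
      have bx: "\<beta> * x ^ k \<le> cmod (Pm q k c m - z)" using \<beta>(2)[of m] mT unfolding x_def T_def by simp
      have pos: "0 < \<beta> * x ^ k" using \<beta>(1) x1 by simp
      have "(\<beta> * x ^ k)\<^sup>2 \<le> (cmod (Pm q k c m - z))\<^sup>2" by (rule power_mono[OF bx]) (use pos in simp)
      then have sq: "\<beta>\<^sup>2 * x ^ (2*k) \<le> (cmod (Pm q k c m - z))\<^sup>2"
        by (simp add: power_mult_distrib power_mult[symmetric] mult.commute)
      have mx: "max 1 \<bar>real_of_int m\<bar> = x" using x1 unfolding x_def by simp
      have "?w m = (cmod (fc m))\<^sup>2 * x ^ (2*k) / (cmod (Pm q k c m - z))\<^sup>2"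
        using mW unfolding bu_def mx by (simp add: norm_divide power_divide)
      also have "\<dots> \<le> (cmod (fc m))\<^sup>2 * x ^ (2*k) / (\<beta>\<^sup>2 * x ^ (2*k))"
      proof (rule divide_left_mono[OF sq])
        have pos2: "0 < \<beta>\<^sup>2 * x ^ (2*k)" using \<beta>(1) x1 by simp
        moreover have "0 < (cmod (Pm q k c m - z))\<^sup>2" using pos2 sq by linarith
        ultimately show "0 < (cmod (Pm q k c m - z))\<^sup>2 * (\<beta>\<^sup>2 * x ^ (2*k))" by simp
      qed simp
      also have "\<dots> = (cmod (fc m))\<^sup>2 / \<beta>\<^sup>2" using x1 by simp
      finally show "?w m \<le> (cmod (fc m))\<^sup>2 / \<beta>\<^sup>2" .
    qed
    have wsum: "?w summable_on UNIV"
    proof -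
      have "?w summable_on (Big \<union> (UNIV - Big))"
        by (rule summable_on_union[OF wBig summable_on_finite[OF small]])
      then show ?thesis by simp
    qed
    have bsum: "(\<lambda>m. (cmod (bu m))\<^sup>2) summable_on UNIV"
    proof (rule summable_on_real_comparison[OF wsum])
      fix m :: int
      show "0 \<le> (cmod (bu m))\<^sup>2" by simp
      have "1 \<le> (max 1 \<bar>real_of_int m\<bar>) ^ (2 * k)" by simp
      then show "(cmod (bu m))\<^sup>2 \<le> ?w m" by (simp add: mult_le_cancel_left1)
    qed
    obtain u where u: "u \<in> L2T" "\<forall>m. fcoeff u m = bu m" using riesz_fischer[OF bsum] by blast
    have uH: "u \<in> HsT k" using u wsum unfolding HsT_def by simp
    have "\<forall>m. fcoeff (G u) m = fcoeff f m"
    proof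
      fix m show "fcoeff (G u) m = fcoeff f m"
      proof (cases "m \<in> W")
        case True
        have "fcoeff (G u) m = (\<Sum>n\<in>W. Bm m n * (\<Sum>l\<in>W. Cm n l * fc l))"
          unfolding cW[OF uH True] by (intro sum.cong refl) (simp add: u(2) bu_def)
        also have "\<dots> = (\<Sum>n\<in>W. \<Sum>l\<in>W. Bm m n * Cm n l * fc l)"
          by (simp add: sum_distrib_left mult.assoc)
        also have "\<dots> = (\<Sum>l\<in>W. \<Sum>n\<in>W. Bm m n * Cm n l * fc l)" by (rule sum.swap)
        also have "\<dots> = (\<Sum>l\<in>W. (\<Sum>n\<in>W. Bm m n * Cm n l) * fc l)"
          by (simp add: sum_distrib_right)
        also have "\<dots> = (\<Sum>l\<in>W. (if m = l then 1 else 0) * fc l)"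
          by (intro sum.cong refl) (use CR True in simp)
        also have "\<dots> = fc m" by (rule sum_delta_mult[OF Wf True])
        finally show ?thesis unfolding fc_def .
      next
        case False
        then show ?thesis using cO[OF uH False] u(2) Pnz[OF False] unfolding bu_def fc_def by simp
      qed
    qed
    then have "AE x in mu. G u x = f x"
      by (intro L1_eq_coeffs L2_integrable GL2 uH fL2)
    then have "aeqT (\<lambda>\<theta>. L u \<theta> - z * u \<theta>) f" unfolding aeqT_mu G_def by simp
    then show "\<exists>u\<in>HsT k. aeqT (\<lambda>\<theta>. L u \<theta> - z * u \<theta>) f" using uH by blast
  qed
  have inj: "\<forall>u\<in>HsT k. aeqT (\<lambda>\<theta>. L u \<theta> - z * u \<theta>) (\<lambda>_. 0) \<longrightarrow> aeqT u (\<lambda>_. 0)"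
  proof (intro ballI impI)
    fix u assume uH: "u \<in> HsT k" and h: "aeqT (\<lambda>\<theta>. L u \<theta> - z * u \<theta>) (\<lambda>_. 0)"
    have g0: "fcoeff (G u) m = 0" for m
      by (rule aeqT_zero_fcoeff[OF L2_meas[OF GL2[OF uH]]]) (use h in \<open>simp add: G_def\<close>)
    have "\<forall>m. fcoeff u m = 0"
    proof
      fix m show "fcoeff u m = 0"
      proof (cases "m \<in> W")
        case True
        then show ?thesis using uW[OF uH True] g0 by simp
      next
        case False
        then show ?thesis using cO[OF uH False] g0[of m] Pnz[OF False] by simp
      qed
    qed
    then have "AE x in mu. u x = 0" by (intro fourier_unique L2_integrable HsT_L2[OF uH])
    then show "aeqT u (\<lambda>_. 0)" unfolding aeqT_mu by simp
  qed
  define Cs where "Cs = (\<Sum>m\<in>W. \<Sum>l\<in>W. cmod (Cm m l))"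
  define Kc where "Kc = real (card W) ^ 3 * Cs\<^sup>2"
  have Cs_ge: "cmod (Cm m l) \<le> Cs" if "m \<in> W" "l \<in> W" for m l
  proof -
    have "cmod (Cm m l) \<le> (\<Sum>l\<in>W. cmod (Cm m l))" by (rule member_le_sum) (use that Wf in auto)
    also have "\<dots> \<le> Cs" unfolding Cs_def
      by (rule member_le_sum[of m W "\<lambda>m. \<Sum>l\<in>W. cmod (Cm m l)"]) (use that Wf in \<open>auto intro: sum_nonneg\<close>)
    finally show ?thesis .
  qed
  have Cs0: "0 \<le> Cs" unfolding Cs_def by (intro sum_nonneg) auto
  have bdd: "\<exists>C. \<forall>u\<in>HsT k. l2normT u \<le> C * l2normT (\<lambda>\<theta>. L u \<theta> - z * u \<theta>)"
  proof (intro exI ballI)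
    fix u assume uH: "u \<in> HsT k"
    have uL2: "u \<in> L2T" by (rule HsT_L2[OF uH])
    have gL2: "G u \<in> L2T" by (rule GL2[OF uH])
    define um where "um = fcoeff u"
    define gm where "gm = fcoeff (G u)"
    define Gs where "Gs = sqrt (\<Sum>l\<in>W. (cmod (gm l))\<^sup>2)"
    have gGs: "cmod (gm l) \<le> Gs" if "l \<in> W" for l
    proof -
      have "(cmod (gm l))\<^sup>2 \<le> (\<Sum>l\<in>W. (cmod (gm l))\<^sup>2)" by (rule member_le_sum) (use that Wf in auto)
      then show ?thesis unfolding Gs_def by (simp add: real_le_rsqrt)
    qed
    have Gs0: "0 \<le> Gs" unfolding Gs_def by (simp add: sum_nonneg)
    have umW: "(cmod (um m))\<^sup>2 \<le> (real (card W) * Cs)\<^sup>2 * (\<Sum>l\<in>W. (cmod (gm l))\<^sup>2)" if "m \<in> W" for m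
    proof -
      have "cmod (um m) \<le> (\<Sum>l\<in>W. cmod (Cm m l * gm l))"
        unfolding um_def gm_def uW[OF uH that] by (rule norm_sum)
      also have "\<dots> \<le> (\<Sum>l\<in>W. Cs * Gs)"
        by (intro sum_mono) (auto simp: norm_mult intro!: mult_mono Cs_ge gGs that Cs0)
      also have "\<dots> = real (card W) * Cs * Gs" by simp
      finally have "cmod (um m) \<le> real (card W) * Cs * Gs" .
      then have "(cmod (um m))\<^sup>2 \<le> (real (card W) * Cs * Gs)\<^sup>2" by (rule power_mono) simp
      also have "\<dots> = (real (card W) * Cs)\<^sup>2 * (\<Sum>l\<in>W. (cmod (gm l))\<^sup>2)"
        unfolding Gs_def by (simp add: power_mult_distrib sum_nonneg)
      finally show ?thesis .
    qed
    have sumW: "(\<Sum>m\<in>W. (cmod (um m))\<^sup>2) \<le> Kc * (\<Sum>l\<in>W. (cmod (gm l))\<^sup>2)"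
    proof -
      have "(\<Sum>m\<in>W. (cmod (um m))\<^sup>2) \<le> (\<Sum>m\<in>W. (real (card W) * Cs)\<^sup>2 * (\<Sum>l\<in>W. (cmod (gm l))\<^sup>2))"
        by (rule sum_mono) (rule umW)
      also have "\<dots> = Kc * (\<Sum>l\<in>W. (cmod (gm l))\<^sup>2)"
        unfolding Kc_def by (simp add: power_mult_distrib power3_eq_cube power2_eq_square mult_ac)
      finally show ?thesis .
    qed
    have umO: "(cmod (um m))\<^sup>2 \<le> (cmod (gm m))\<^sup>2" if "m \<notin> W" for m
    proof -
      have "cmod (um m) \<le> cmod (Pm q k c m - z) * cmod (um m)"
        using gap[of m] that unfolding W_def by (simp add: mult_le_cancel_right1)
      also have "\<dots> = cmod (gm m)" unfolding gm_def um_def cO[OF uH that] by (simp add: norm_mult)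
      finally show ?thesis by (rule power_mono) simp
    qed
    have su: "(\<lambda>m. (cmod (um m))\<^sup>2) summable_on UNIV" unfolding um_def by (rule bessel_summable(1)[OF uL2])
    have sg: "(\<lambda>m. (cmod (gm m))\<^sup>2) summable_on UNIV" unfolding gm_def by (rule bessel_summable(1)[OF gL2])
    have split: "infsum F UNIV = (\<Sum>m\<in>W. F m) + infsum F (UNIV - W)" if "F summable_on UNIV" for F :: "int \<Rightarrow> real"
    proof -
      have "infsum F (W \<union> (UNIV - W)) = infsum F W + infsum F (UNIV - W)"
        by (rule infsum_Un_disjoint) (use summable_on_subset_banach[OF that] in auto)
      then show ?thesis using Wf by (simp add: infsum_finite)
    qed
    have Kc0: "0 \<le> Kc" unfolding Kc_def by simp
    have "infsum (\<lambda>m. (cmod (um m))\<^sup>2) UNIV \<le> max 1 Kc * infsum (\<lambda>m. (cmod (gm m))\<^sup>2) UNIV"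
    proof -
      have o: "infsum (\<lambda>m. (cmod (um m))\<^sup>2) (UNIV - W) \<le> infsum (\<lambda>m. (cmod (gm m))\<^sup>2) (UNIV - W)"
        by (rule infsum_mono) (use summable_on_subset_banach[OF su] summable_on_subset_banach[OF sg] umO in auto)
      have o0: "0 \<le> infsum (\<lambda>m. (cmod (gm m))\<^sup>2) (UNIV - W)" by (rule infsum_nonneg) simp
      have w0: "0 \<le> (\<Sum>l\<in>W. (cmod (gm l))\<^sup>2)" by (simp add: sum_nonneg)
      have "infsum (\<lambda>m. (cmod (um m))\<^sup>2) UNIV = (\<Sum>m\<in>W. (cmod (um m))\<^sup>2) + infsum (\<lambda>m. (cmod (um m))\<^sup>2) (UNIV - W)"
        by (rule split[OF su])
      also have "\<dots> \<le> Kc * (\<Sum>l\<in>W. (cmod (gm l))\<^sup>2) + infsum (\<lambda>m. (cmod (gm m))\<^sup>2) (UNIV - W)"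
        using sumW o by linarith
      also have "\<dots> \<le> max 1 Kc * (\<Sum>l\<in>W. (cmod (gm l))\<^sup>2) + max 1 Kc * infsum (\<lambda>m. (cmod (gm m))\<^sup>2) (UNIV - W)"
      proof (rule add_mono)
        show "Kc * (\<Sum>l\<in>W. (cmod (gm l))\<^sup>2) \<le> max 1 Kc * (\<Sum>l\<in>W. (cmod (gm l))\<^sup>2)"
          by (rule mult_right_mono) (use w0 in auto)
        have "1 * infsum (\<lambda>m. (cmod (gm m))\<^sup>2) (UNIV - W) \<le> max 1 Kc * infsum (\<lambda>m. (cmod (gm m))\<^sup>2) (UNIV - W)"
          by (rule mult_right_mono) (use o0 in auto)
        then show "infsum (\<lambda>m. (cmod (gm m))\<^sup>2) (UNIV - W) \<le> max 1 Kc * infsum (\<lambda>m. (cmod (gm m))\<^sup>2) (UNIV - W)"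
          by simp
      qed
      also have "\<dots> = max 1 Kc * infsum (\<lambda>m. (cmod (gm m))\<^sup>2) UNIV"
        using split[OF sg] by (simp add: distrib_left)
      finally show ?thesis .
    qed
    then have "2*pi*infsum (\<lambda>m. (cmod (um m))\<^sup>2) UNIV \<le> max 1 Kc * (2*pi*infsum (\<lambda>m. (cmod (gm m))\<^sup>2) UNIV)"
      by (simp add: mult_ac)
    also have "\<dots> \<le> max 1 Kc * integral\<^sup>L mu (\<lambda>x. (cmod (G u x))\<^sup>2)"
      by (rule mult_left_mono) (use bessel_summable(2)[OF gL2] in \<open>simp_all add: gm_def\<close>)
    finally have "integral\<^sup>L mu (\<lambda>x. (cmod (u x))\<^sup>2) \<le> max 1 Kc * integral\<^sup>L mu (\<lambda>x. (cmod (G u x))\<^sup>2)"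
      using parseval[OF uL2] unfolding um_def by simp
    then have "sqrt (integral\<^sup>L mu (\<lambda>x. (cmod (u x))\<^sup>2)) \<le> sqrt (max 1 Kc * integral\<^sup>L mu (\<lambda>x. (cmod (G u x))\<^sup>2))"
      by (rule real_sqrt_le_mono)
    also have "\<dots> = sqrt (max 1 Kc) * sqrt (integral\<^sup>L mu (\<lambda>x. (cmod (G u x))\<^sup>2))"
      by (rule real_sqrt_mult)
    finally show "l2normT u \<le> sqrt (max 1 Kc) * l2normT (\<lambda>\<theta>. L u \<theta> - z * u \<theta>)"
      unfolding l2normT_mu G_def by simp
  qed
  show ?thesis unfolding spectrumL2_def using surj inj bdd by blast
qed

theorem mainTheorem11:
  fixes k p q ell :: nat and c :: "nat \<Rightarrow> complex" and a :: "nat \<Rightarrow> real \<Rightarrow> complex"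
  assumes "k \<ge> 1" and "p < k" and "q \<le> k" and "ell \<ge> 1" and "c k \<noteq> 0"
    and "\<forall>j\<le>p. a j \<in> HsT ell"
  shows "\<forall>c0>0. \<forall>\<^sub>F N in sequentially.
    eigs_on (\<lambda>u \<theta>. L0op q k c u \<theta> + projN N (L1op p a u) \<theta>) (ranP N)
      \<inter> {z. cmod z \<le> c0 * real N ^ (k - 1)}
    = spectrumL2 (\<lambda>u \<theta>. L0op q k c u \<theta> + projN N (L1op p a (projN N u)) \<theta>) (HsT k)
      \<inter> {z. cmod z \<le> c0 * real N ^ (k - 1)}"
proof (intro allI impI)
  fix c0 :: real assume c0: "c0 > 0"
  have aL2: "\<forall>j\<le>p. a j \<in> L2T" using assms(6) HsT_L2 by blast
  obtain N0 where N0: "\<forall>N\<ge>N0. \<forall>m. m \<notin> Wn N \<longrightarrow> c0 * real N ^ (k-1) + 1 \<le> cmod (Pm q k c m)"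
    using Pm_gap[of c k q c0] assms(5) assms(3) assms(1) c0 by blast
  have main: "eigs_on (\<lambda>u \<theta>. L0op q k c u \<theta> + projN N (L1op p a u) \<theta>) (ranP N)
      \<inter> {z. cmod z \<le> c0 * real N ^ (k - 1)}
    = spectrumL2 (\<lambda>u \<theta>. L0op q k c u \<theta> + projN N (L1op p a (projN N u)) \<theta>) (HsT k)
      \<inter> {z. cmod z \<le> c0 * real N ^ (k - 1)}" if N: "N0 \<le> N" for N
  proof (intro equalityI subsetI)
    fix z assume "z \<in> eigs_on (\<lambda>u \<theta>. L0op q k c u \<theta> + projN N (L1op p a u) \<theta>) (ranP N)
      \<inter> {z. cmod z \<le> c0 * real N ^ (k - 1)}"
    then show "z \<in> spectrumL2 (\<lambda>u \<theta>. L0op q k c u \<theta> + projN N (L1op p a (projN N u)) \<theta>) (HsT k)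
      \<inter> {z. cmod z \<le> c0 * real N ^ (k - 1)}"
      using eig_sub_spec[OF refl refl] by blast
  next
    fix z assume z: "z \<in> spectrumL2 (\<lambda>u \<theta>. L0op q k c u \<theta> + projN N (L1op p a (projN N u)) \<theta>) (HsT k)
      \<inter> {z. cmod z \<le> c0 * real N ^ (k - 1)}"
    show "z \<in> eigs_on (\<lambda>u \<theta>. L0op q k c u \<theta> + projN N (L1op p a u) \<theta>) (ranP N)
      \<inter> {z. cmod z \<le> c0 * real N ^ (k - 1)}"
    proof (rule ccontr)
      assume nz: "z \<notin> eigs_on (\<lambda>u \<theta>. L0op q k c u \<theta> + projN N (L1op p a u) \<theta>) (ranP N)
        \<inter> {z. cmod z \<le> c0 * real N ^ (k - 1)}"
      have zD: "cmod z \<le> c0 * real N ^ (k - 1)" using z by blast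
      then have ne: "z \<notin> eigs_on (\<lambda>u \<theta>. L0op q k c u \<theta> + projN N (L1op p a u) \<theta>) (ranP N)"
        using nz by blast
      have gap: "1 \<le> cmod (Pm q k c m - z)" if m: "m \<notin> Wn N" for m
      proof -
        have "c0 * real N ^ (k-1) + 1 \<le> cmod (Pm q k c m)" using N0 N m by blast
        moreover have "cmod (Pm q k c m) - cmod z \<le> cmod (Pm q k c m - z)" by (rule norm_triangle_ineq2)
        ultimately show ?thesis using zD by linarith
      qed
      have "z \<notin> spectrumL2 (\<lambda>u \<theta>. L0op q k c u \<theta> + projN N (L1op p a (projN N u)) \<theta>) (HsT k)"
        using resolvent[OF refl refl aL2, of c k q N z] assms(5) assms(3) assms(1) gap ne by blast
      then show False using z by blast
    qed
  qed
  show "\<forall>\<^sub>F N in sequentially.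
    eigs_on (\<lambda>u \<theta>. L0op q k c u \<theta> + projN N (L1op p a u) \<theta>) (ranP N)
      \<inter> {z. cmod z \<le> c0 * real N ^ (k - 1)}
    = spectrumL2 (\<lambda>u \<theta>. L0op q k c u \<theta> + projN N (L1op p a (projN N u)) \<theta>) (HsT k)
      \<inter> {z. cmod z \<le> c0 * real N ^ (k - 1)}"
    unfolding eventually_sequentially using main by blast
qed

end
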